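(* In the setting of the context, suppose that $m$, the order of $\sigma$, is prime. Then for every nonzero integer $k$, $\tilde{\mathfrak g}_{k\delta}=\pi_k(\mathfrak h)\otimes t^k$. Furthermore, if $\mathfrak g$ is a finite-dimensional simple Lie algebra, then $\tilde{\mathfrak g}_{k\delta}\subseteq\tilde{\mathfrak g}_c$.
   Context: All Lie algebras are over $\mathbb C$. An extended affine Lie algebra (EALA) is a triple $(\mathfrak g,(\cdot,\cdot),\mathfrak h)$ where $\mathfrak g$ is a Lie algebra, $\mathfrak h$ a subalgebra and $(\cdot,\cdot)$ a bilinear form such that: the form is symmetric, non-degenerate, invariant; $\mathfrak h$ is finite-dimensional and $\mathfrak g=\bigoplus_{\alpha\in\mathfrak h^*}\mathfrak g_\alpha$, $\mathfrak g_\alpha=\{x:[h,x]=\alpha(h)x\ \forall h\in\mathfrak h\}$, $\mathfrak g_0=\mathfrak h$; with root system $R=\{\alpha:\mathfrak g_\alpha\ne0\}$, $t_\alpha\in\mathfrak h$ given by $\alpha(h)=(h,t_\alpha)$, $(\alpha,\beta)=(t_\alpha,t_\beta)$, $R^\times=\{\alpha\in R:(\alpha,\alpha)\ne0\}$, $R^0=R\setminus R^\times$: $\mathrm{ad}\,x$ locally nilpotent for $x\in\mathfrak g_\alpha$, $\alpha\in R^\times$; $R$ discrete; $R^\times$ connected and isotropic roots non-isolated. Root systems are assumed reduced. A finite-dimensional simple Lie algebra with a Cartan subalgebra and (a multiple of) its Killing form is an EALA of this kind. The core of an EALA is the subalgebra generated by its non-isotropic root spaces. Setting: $(\mathfrak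 g,(\cdot,\cdot),\mathfrak h)$ is an EALA with root system $R$; $\sigma$ is an automorphism of $\mathfrak g$ with $\sigma^m=\mathrm{id}$, $\sigma(\mathfrak h)=\mathfrak h$, $(\sigma x,\sigma y)=(x,y)$, and $C_{\mathfrak g^\sigma}(\mathfrak h^\sigma)=\mathfrak h^\sigma$ ($\mathfrak g^\sigma,\mathfrak h^\sigma$ fixed points, $C$ centralizer). $\sigma$ acts on $\mathfrak h^*$ by $\sigma(\alpha)(h)=\alpha(\sigma^{-1}h)$. Let $\omega$ be a primitive $m$-th root of unity, $\mathfrak g^{\bar i}=\{x:\sigma(x)=\omega^ix\}$, $\pi_j=\frac1m\sum_{i=0}^{m-1}\omega^{-ij}\sigma^i$ (indices mod $m$), $\pi=\pi_0$. Assume some $\alpha\in R^\times$ has $(\pi(\alpha),\pi(\alpha))\ne0$. The affinization $\tilde{\mathfrak g}=\bigoplus_{i\in\mathbb Z}(\mathfrak g^{\bar i}\otimes t^i)\oplus\mathbb Cc\oplus\mathbb Cd$ has bracket $[x\otimes t^n+rc+sd,\,y\otimes t^{n'}+r'c+s'd]=[x,y]\otimes t^{n+n'}+n\delta_{n+n',0}(x,y)c+sn'\,y\otimes t^{n'}-s'n\,x\otimes t^n$ and form $(x\otimes t^n+rc+sd,\,y\otimes t^{n'}+r'c+s'd)=\delta_{n+n',0}(x,y)+rs'+r's$; with $\tilde{\mathfrak h}=\mathfrak h^\sigma\oplus\mathbb Cc\oplus\mathbb Cd$, it is an EALA (a known fact) with root spaces $\tilde{\mathfrak g}_{\tilde\alpha}$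 ($\tilde\alpha\in\tilde{\mathfrak h}^*$) and core $\tilde{\mathfrak g}_c$. $\delta\in\tilde{\mathfrak h}^*$ vanishes on $\mathfrak h^\sigma\oplus\mathbb Cc$ with $\delta(d)=1$. *)

theory Defs
  imports "HOL-Analysis.Analysis"
begin

text \<open>A complex Lie algebra is modelled on the whole carrier of a type 'a
(an abelian group) with an explicit complex scalar multiplication sc and bracket br.\<close>

definition lie_algebra :: "(complex \<Rightarrow> 'a::ab_group_add \<Rightarrow> 'a) \<Rightarrow> ('a \<Rightarrow> 'a \<Rightarrow> 'a) \<Rightarrow> bool" where
  "lie_algebra sc br \<longleftrightarrow> vector_space sc
     \<and> (\<forall>x y z. br (x + y) z = br x z + br y z)
     \<and> (\<forall>c x y. br (sc c x) y = sc c (br x y))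
     \<and> (\<forall>x. br x x = 0)
     \<and> (\<forall>x y z. br x (br y z) + br y (br z x) + br z (br x y) = 0)"

definition subalgebra :: "(complex \<Rightarrow> 'a::ab_group_add \<Rightarrow> 'a) \<Rightarrow> ('a \<Rightarrow> 'a \<Rightarrow> 'a) \<Rightarrow> 'a set \<Rightarrow> bool" where
  "subalgebra sc br A \<longleftrightarrow> module.subspace sc A \<and> (\<forall>x\<in>A. \<forall>y\<in>A. br x y \<in> A)"

definition lie_ideal :: "(complex \<Rightarrow> 'a::ab_group_add \<Rightarrow> 'a) \<Rightarrow> ('a \<Rightarrow> 'a \<Rightarrow> 'a) \<Rightarrow> 'a set \<Rightarrow> bool" where
  "lie_ideal sc br I \<longleftrightarrow> module.subspace sc I \<and> (\<forall>x\<in>I. \<forall>y. br x y \<in> I)"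

definition fin_dim_subspace :: "(complex \<Rightarrow> 'a::ab_group_add \<Rightarrow> 'a) \<Rightarrow> 'a set \<Rightarrow> bool" where
  "fin_dim_subspace sc A \<longleftrightarrow> (\<exists>S. finite S \<and> S \<subseteq> A \<and> module.span sc S = A)"

definition fd_simple :: "(complex \<Rightarrow> 'a::ab_group_add \<Rightarrow> 'a) \<Rightarrow> ('a \<Rightarrow> 'a \<Rightarrow> 'a) \<Rightarrow> bool" where
  "fd_simple sc br \<longleftrightarrow> lie_algebra sc br \<and> fin_dim_subspace sc UNIV
     \<and> (\<exists>x y. br x y \<noteq> 0)
     \<and> (\<forall>I. lie_ideal sc br I \<longrightarrow> I = {0} \<or> I = UNIV)"

text \<open>The dual space of H: functionals linear on H, extended by zero outside H.\<close>
definition hdual :: "(complex \<Rightarrow> 'a::ab_group_add \<Rightarrow> 'a) \<Rightarrow> 'a set \<Rightarrow> ('a \<Rightarrow> complex) set" where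
  "hdual sc H = {\<alpha>. (\<forall>x\<in>H. \<forall>y\<in>H. \<alpha> (x + y) = \<alpha> x + \<alpha> y)
                   \<and> (\<forall>c. \<forall>x\<in>H. \<alpha> (sc c x) = c * \<alpha> x)
                   \<and> (\<forall>x. x \<notin> H \<longrightarrow> \<alpha> x = 0)}"

definition rootsp :: "(complex \<Rightarrow> 'a \<Rightarrow> 'a) \<Rightarrow> ('a \<Rightarrow> 'a \<Rightarrow> 'a) \<Rightarrow> 'a set \<Rightarrow> ('a \<Rightarrow> complex) \<Rightarrow> 'a set" where
  "rootsp sc br H \<alpha> = {x. \<forall>h\<in>H. br h x = sc (\<alpha> h) x}"

definition roots :: "(complex \<Rightarrow> 'a::ab_group_add \<Rightarrow> 'a) \<Rightarrow> ('a \<Rightarrow> 'a \<Rightarrow> 'a) \<Rightarrow> 'a set \<Rightarrow> ('a \<Rightarrow> complex) set" where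
  "roots sc br H = {\<alpha> \<in> hdual sc H. rootsp sc br H \<alpha> \<noteq> {0}}"

definition tvec :: "('a \<Rightarrow> 'a \<Rightarrow> complex) \<Rightarrow> 'a set \<Rightarrow> ('a \<Rightarrow> complex) \<Rightarrow> 'a" where
  "tvec B H \<alpha> = (THE t. t \<in> H \<and> (\<forall>h\<in>H. \<alpha> h = B h t))"

definition dform :: "('a \<Rightarrow> 'a \<Rightarrow> complex) \<Rightarrow> 'a set \<Rightarrow> ('a \<Rightarrow> complex) \<Rightarrow> ('a \<Rightarrow> complex) \<Rightarrow> complex" where
  "dform B H \<alpha> \<beta> = B (tvec B H \<alpha>) (tvec B H \<beta>)"

definition nonisotropic_roots :: "(complex \<Rightarrow> 'a::ab_group_add \<Rightarrow> 'a) \<Rightarrow> ('a \<Rightarrow> 'a \<Rightarrow> 'a) \<Rightarrow> ('a \<Rightarrow> 'a \<Rightarrow> complex) \<Rightarrow> 'a set \<Rightarrow> ('a \<Rightarrow> complex) set" where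
  "nonisotropic_roots sc br B H = {\<alpha> \<in> roots sc br H. dform B H \<alpha> \<alpha> \<noteq> 0}"

definition isotropic_roots :: "(complex \<Rightarrow> 'a::ab_group_add \<Rightarrow> 'a) \<Rightarrow> ('a \<Rightarrow> 'a \<Rightarrow> 'a) \<Rightarrow> ('a \<Rightarrow> 'a \<Rightarrow> complex) \<Rightarrow> 'a set \<Rightarrow> ('a \<Rightarrow> complex) set" where
  "isotropic_roots sc br B H = roots sc br H - nonisotropic_roots sc br B H"

text \<open>The topology on H*
 is the product (pointwise) topology on functions, which on the finite-dimensional
 space H* (functions vanishing off H) is the usual vector space topology.\<close>
definition eala :: "(complex \<Rightarrow> 'a::ab_group_add \<Rightarrow> 'a) \<Rightarrow> ('a \<Rightarrow> 'a \<Rightarrow> 'a) \<Rightarrow> ('a \<Rightarrow> 'a \<Rightarrow> complex) \<Rightarrow> 'a set \<Rightarrow> bool" where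
  "eala sc br B H \<longleftrightarrow>
     lie_algebra sc br
     \<comment> \<open>symmetric, bilinear, non-degenerate, invariant form\<close>
     \<and> (\<forall>x y z. B (x + y) z = B x z + B y z)
     \<and> (\<forall>c x y. B (sc c x) y = c * B x y)
     \<and> (\<forall>x y. B x y = B y x)
     \<and> (\<forall>x. (\<forall>y. B x y = 0) \<longrightarrow> x = 0)
     \<and> (\<forall>x y z. B (br x y) z = B x (br y z))
     \<comment> \<open>H finite-dimensional subalgebra, root space decomposition, g_0 = H\<close>
     \<and> subalgebra sc br H \<and> fin_dim_subspace sc H
     \<and> module.span sc (\<Union>\<alpha>\<in>hdual sc H. rootsp sc br H \<alpha>) = UNIV
     \<and> rootsp sc br H (\<lambda>_. 0) = H
     \<comment> \<open>ad x locally nilpotent for x in a non-isotropic root space\<close>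
     \<and> (\<forall>\<alpha>\<in>nonisotropic_roots sc br B H. \<forall>x\<in>rootsp sc br H \<alpha>. \<forall>y. \<exists>n. (br x ^^ n) y = 0)
     \<comment> \<open>R discrete\<close>
     \<and> (\<forall>\<alpha>\<in>roots sc br H. \<exists>U. open U \<and> U \<inter> roots sc br H = {\<alpha>})
     \<comment> \<open>R^x connected (indecomposable)\<close>
     \<and> (\<forall>P Q. P \<union> Q = nonisotropic_roots sc br B H \<and> (\<forall>\<alpha>\<in>P. \<forall>\<beta>\<in>Q. dform B H \<alpha> \<beta> = 0)
              \<longrightarrow> P = {} \<or> Q = {})
     \<comment> \<open>isotropic roots non-isolated\<close>
     \<and> (\<forall>\<delta>\<in>isotropic_roots sc br B H. \<exists>\<alpha>\<in>nonisotropic_roots sc br B H.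
            (\<lambda>h. \<alpha> h + \<delta> h) \<in> roots sc br H)
     \<comment> \<open>reduced\<close>
     \<and> (\<forall>\<alpha>\<in>nonisotropic_roots sc br B H. (\<lambda>h. 2 * \<alpha> h) \<notin> roots sc br H)"

definition fixed_pts :: "('a \<Rightarrow> 'a) \<Rightarrow> 'a set" where
  "fixed_pts \<sigma> = {x. \<sigma> x = x}"

definition admissible_aut :: "(complex \<Rightarrow> 'a::ab_group_add \<Rightarrow> 'a) \<Rightarrow> ('a \<Rightarrow> 'a \<Rightarrow> 'a) \<Rightarrow> ('a \<Rightarrow> 'a \<Rightarrow> complex) \<Rightarrow> 'a set \<Rightarrow> ('a \<Rightarrow> 'a) \<Rightarrow> nat \<Rightarrow> bool" where
  "admissible_aut sc br B H \<sigma> m \<longleftrightarrow>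
     bij \<sigma>
     \<and> (\<forall>x y. \<sigma> (x + y) = \<sigma> x + \<sigma> y)
     \<and> (\<forall>c x. \<sigma> (sc c x) = sc c (\<sigma> x))
     \<and> (\<forall>x y. \<sigma> (br x y) = br (\<sigma> x) (\<sigma> y))
     \<and> (\<sigma> ^^ m) = id
     \<and> \<sigma> ` H = H
     \<and> (\<forall>x y. B (\<sigma> x) (\<sigma> y) = B x y)
     \<and> {x \<in> fixed_pts \<sigma>. \<forall>h\<in>H \<inter> fixed_pts \<sigma>. br h x = 0} = H \<inter> fixed_pts \<sigma>"

definition primitive_root :: "complex \<Rightarrow> nat \<Rightarrow> bool" where
  "primitive_root \<omega> m \<longleftrightarrow> \<omega> ^ m = 1 \<and> (\<forall>j. 0 < j \<and> j < m \<longrightarrow> \<omega> ^ j \<noteq> 1)"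

definition dual_act :: "('a \<Rightarrow> 'a) \<Rightarrow> nat \<Rightarrow> ('a \<Rightarrow> complex) \<Rightarrow> ('a \<Rightarrow> complex)" where
  "dual_act \<sigma> i \<alpha> = (\<lambda>h. \<alpha> ((inv \<sigma> ^^ i) h))"

definition pi_dual :: "('a \<Rightarrow> 'a) \<Rightarrow> nat \<Rightarrow> ('a \<Rightarrow> complex) \<Rightarrow> ('a \<Rightarrow> complex)" where
  "pi_dual \<sigma> m \<alpha> = (\<lambda>h. (1 / of_nat m) * (\<Sum>i<m. dual_act \<sigma> i \<alpha> h))"

text \<open>pi_j on g (index j an integer; only j mod m matters).\<close>
definition pi_k :: "(complex \<Rightarrow> 'a::ab_group_add \<Rightarrow> 'a) \<Rightarrow> ('a \<Rightarrow> 'a) \<Rightarrow> nat \<Rightarrow> complex \<Rightarrow> int \<Rightarrow> 'a \<Rightarrow> 'a" where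
  "pi_k sc \<sigma> m \<omega> j x = sc (1 / of_nat m) (\<Sum>i<m. sc (\<omega> powi (- (int i * j))) ((\<sigma> ^^ i) x))"

definition eigsp :: "(complex \<Rightarrow> 'a \<Rightarrow> 'a) \<Rightarrow> ('a \<Rightarrow> 'a) \<Rightarrow> complex \<Rightarrow> int \<Rightarrow> 'a set" where
  "eigsp sc \<sigma> \<omega> i = {x. \<sigma> x = sc (\<omega> powi i) x}"

text \<open>An element  sum_n f(n) (x) t^n + r c + s d  is represented by the triple (f, r, s),
 with f finitely supported and f(n) in g^{n mod m}.\<close>
type_synonym 'a aff = "(int \<Rightarrow> 'a) \<times> complex \<times> complex"

definition aff_carrier :: "(complex \<Rightarrow> 'a::ab_group_add \<Rightarrow> 'a) \<Rightarrow> ('a \<Rightarrow> 'a) \<Rightarrow> complex \<Rightarrow> 'a aff set" where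
  "aff_carrier sc \<sigma> \<omega> = {(f, r, s). finite {n. f n \<noteq> 0} \<and> (\<forall>n. f n \<in> eigsp sc \<sigma> \<omega> n)}"

definition aff_zero :: "'a::ab_group_add aff" where
  "aff_zero = (\<lambda>_. 0, 0, 0)"

definition aff_add :: "'a::ab_group_add aff \<Rightarrow> 'a aff \<Rightarrow> 'a aff" where
  "aff_add X Y = (case X of (f, r, s) \<Rightarrow> case Y of (f', r', s') \<Rightarrow> (\<lambda>n. f n + f' n, r + r', s + s'))"

definition aff_scale :: "(complex \<Rightarrow> 'a \<Rightarrow> 'a) \<Rightarrow> complex \<Rightarrow> 'a aff \<Rightarrow> 'a aff" where
  "aff_scale sc a X = (case X of (f, r, s) \<Rightarrow> (\<lambda>n. sc a (f n), a * r, a * s))"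

text \<open>[x t^n + rc + sd, y t^n' + r'c + s'd]
  = [x,y] t^(n+n') + n delta_{n+n',0} (x,y) c + s n' y t^n' - s' n x t^n.\<close>
definition aff_br :: "(complex \<Rightarrow> 'a::ab_group_add \<Rightarrow> 'a) \<Rightarrow> ('a \<Rightarrow> 'a \<Rightarrow> 'a) \<Rightarrow> ('a \<Rightarrow> 'a \<Rightarrow> complex) \<Rightarrow> 'a aff \<Rightarrow> 'a aff \<Rightarrow> 'a aff" where
  "aff_br sc br B X Y = (case X of (f, r, s) \<Rightarrow> case Y of (f', r', s') \<Rightarrow>
     (\<lambda>n. (\<Sum>a\<in>{a. f a \<noteq> 0}. br (f a) (f' (n - a)))
          + sc (s * of_int n) (f' n) - sc (s' * of_int n) (f n),
      (\<Sum>a\<in>{a. f a \<noteq> 0}. of_int a * B (f a) (f' (- a))),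
      0))"

definition aff_form :: "('a::ab_group_add \<Rightarrow> 'a \<Rightarrow> complex) \<Rightarrow> 'a aff \<Rightarrow> 'a aff \<Rightarrow> complex" where
  "aff_form B X Y = (case X of (f, r, s) \<Rightarrow> case Y of (f', r', s') \<Rightarrow>
     (\<Sum>a\<in>{a. f a \<noteq> 0}. B (f a) (f' (- a))) + r * s' + r' * s)"

definition tens :: "int \<Rightarrow> 'a::zero \<Rightarrow> 'a aff" where
  "tens k x = (\<lambda>n. if n = k then x else 0, 0, 0)"

text \<open>The Cartan subalgebra  H~ = H^sigma + C c + C d.\<close>
definition aff_H :: "'a::ab_group_add set \<Rightarrow> ('a \<Rightarrow> 'a) \<Rightarrow> 'a aff set" where
  "aff_H H \<sigma> = {(f, r, s). f 0 \<in> H \<inter> fixed_pts \<sigma> \<and> (\<forall>n. n \<noteq> 0 \<longrightarrow> f n = 0)}"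

definition aff_hdual :: "(complex \<Rightarrow> 'a::ab_group_add \<Rightarrow> 'a) \<Rightarrow> 'a set \<Rightarrow> ('a \<Rightarrow> 'a) \<Rightarrow> ('a aff \<Rightarrow> complex) set" where
  "aff_hdual sc H \<sigma> = {\<phi>. (\<forall>X\<in>aff_H H \<sigma>. \<forall>Y\<in>aff_H H \<sigma>. \<phi> (aff_add X Y) = \<phi> X + \<phi> Y)
                   \<and> (\<forall>c. \<forall>X\<in>aff_H H \<sigma>. \<phi> (aff_scale sc c X) = c * \<phi> X)
                   \<and> (\<forall>X. X \<notin> aff_H H \<sigma> \<longrightarrow> \<phi> X = 0)}"

definition aff_rootsp :: "(complex \<Rightarrow> 'a::ab_group_add \<Rightarrow> 'a) \<Rightarrow> ('a \<Rightarrow> 'a \<Rightarrow> 'a) \<Rightarrow> ('a \<Rightarrow> 'a \<Rightarrow> complex)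
     \<Rightarrow> 'a set \<Rightarrow> ('a \<Rightarrow> 'a) \<Rightarrow> complex \<Rightarrow> ('a aff \<Rightarrow> complex) \<Rightarrow> 'a aff set" where
  "aff_rootsp sc br B H \<sigma> \<omega> \<phi> = {X \<in> aff_carrier sc \<sigma> \<omega>.
      \<forall>Z\<in>aff_H H \<sigma>. aff_br sc br B Z X = aff_scale sc (\<phi> Z) X}"

definition aff_roots :: "(complex \<Rightarrow> 'a::ab_group_add \<Rightarrow> 'a) \<Rightarrow> ('a \<Rightarrow> 'a \<Rightarrow> 'a) \<Rightarrow> ('a \<Rightarrow> 'a \<Rightarrow> complex)
     \<Rightarrow> 'a set \<Rightarrow> ('a \<Rightarrow> 'a) \<Rightarrow> complex \<Rightarrow> ('a aff \<Rightarrow> complex) set" where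
  "aff_roots sc br B H \<sigma> \<omega> = {\<phi> \<in> aff_hdual sc H \<sigma>. aff_rootsp sc br B H \<sigma> \<omega> \<phi> \<noteq> {aff_zero}}"

definition aff_tvec :: "('a::ab_group_add \<Rightarrow> 'a \<Rightarrow> complex) \<Rightarrow> 'a set \<Rightarrow> ('a \<Rightarrow> 'a) \<Rightarrow> ('a aff \<Rightarrow> complex) \<Rightarrow> 'a aff" where
  "aff_tvec B H \<sigma> \<phi> = (THE T. T \<in> aff_H H \<sigma> \<and> (\<forall>Z\<in>aff_H H \<sigma>. \<phi> Z = aff_form B Z T))"

definition aff_nonisotropic_roots :: "(complex \<Rightarrow> 'a::ab_group_add \<Rightarrow> 'a) \<Rightarrow> ('a \<Rightarrow> 'a \<Rightarrow> 'a) \<Rightarrow> ('a \<Rightarrow> 'a \<Rightarrow> complex)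
     \<Rightarrow> 'a set \<Rightarrow> ('a \<Rightarrow> 'a) \<Rightarrow> complex \<Rightarrow> ('a aff \<Rightarrow> complex) set" where
  "aff_nonisotropic_roots sc br B H \<sigma> \<omega> = {\<phi> \<in> aff_roots sc br B H \<sigma> \<omega>.
      aff_form B (aff_tvec B H \<sigma> \<phi>) (aff_tvec B H \<sigma> \<phi>) \<noteq> 0}"

definition aff_core :: "(complex \<Rightarrow> 'a::ab_group_add \<Rightarrow> 'a) \<Rightarrow> ('a \<Rightarrow> 'a \<Rightarrow> 'a) \<Rightarrow> ('a \<Rightarrow> 'a \<Rightarrow> complex)
     \<Rightarrow> 'a set \<Rightarrow> ('a \<Rightarrow> 'a) \<Rightarrow> complex \<Rightarrow> 'a aff set" where
  "aff_core sc br B H \<sigma> \<omega> = \<Inter> {A. A \<subseteq> aff_carrier sc \<sigma> \<omega> \<and> aff_zero \<in> A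
      \<and> (\<forall>X\<in>A. \<forall>Y\<in>A. aff_add X Y \<in> A)
      \<and> (\<forall>c. \<forall>X\<in>A. aff_scale sc c X \<in> A)
      \<and> (\<forall>X\<in>A. \<forall>Y\<in>A. aff_br sc br B X Y \<in> A)
      \<and> (\<Union>\<phi>\<in>aff_nonisotropic_roots sc br B H \<sigma> \<omega>. aff_rootsp sc br B H \<sigma> \<omega> \<phi>) \<subseteq> A}"

text \<open>k delta as a functional on H~: vanishes on H^sigma + C c, and delta(d) = 1.\<close>
definition kdelta :: "'a::ab_group_add set \<Rightarrow> ('a \<Rightarrow> 'a) \<Rightarrow> int \<Rightarrow> 'a aff \<Rightarrow> complex" where
  "kdelta H \<sigma> k X = (if X \<in> aff_H H \<sigma> then of_int k * snd (snd X) else 0)"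

end

theory Submission
  imports Defs "HOL-Library.Function_Algebras"
begin


locale setting =
  fixes sc :: "complex \<Rightarrow> 'a::ab_group_add \<Rightarrow> 'a"
    and br :: "'a \<Rightarrow> 'a \<Rightarrow> 'a"
    and B :: "'a \<Rightarrow> 'a \<Rightarrow> complex"
    and H :: "'a set"
    and \<sigma> :: "'a \<Rightarrow> 'a"
    and m :: nat
    and \<omega> :: complex
  assumes eala: "eala sc br B H"
    and adm: "admissible_aut sc br B H \<sigma> m"
    and prim: "primitive_root \<omega> m"
    and pr: "prime m"

sublocale setting \<subseteq> vs: vector_space sc
  using eala unfolding eala_def lie_algebra_def by auto

context setting begin

lemma br_add1: "br (x + y) z = br x z + br y z"
  and br_sc1: "br (sc c x) y = sc c (br x y)"
  and br_self: "br x x = 0"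
  and jacobi: "br x (br y z) + br y (br z x) + br z (br x y) = 0"
  using eala unfolding eala_def lie_algebra_def by auto

lemma B_add1: "B (x + y) z = B x z + B y z"
  and B_sc1: "B (sc c x) y = c * B x y"
  and B_sym: "B x y = B y x"
  and B_nondeg: "(\<And>y. B x y = 0) \<Longrightarrow> x = 0"
  and B_inv: "B (br x y) z = B x (br y z)"
  using eala unfolding eala_def by auto

lemma B_add2: "B z (x + y) = B z x + B z y"
  using B_add1 B_sym by metis
lemma B_sc2: "B y (sc c x) = c * B y x"
  using B_sc1 B_sym by metis
lemma B_zero1[simp]: "B 0 y = 0"
  using B_add1[of 0 0 y] by simp
lemma B_zero2[simp]: "B y 0 = 0"
  using B_add2[of y 0 0] by simp
lemma B_minus1: "B (- x) y = - B x y"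
  using B_add1[of x "-x" y] by (simp add: add_eq_0_iff add_eq_0_iff2)
lemma B_minus2: "B y (- x) = - B y x"
  using B_minus1 B_sym by metis
lemma B_diff1: "B (x - z) y = B x y - B z y"
  using B_add1[of x "-z" y] B_minus1 by simp
lemma B_diff2: "B y (x - z) = B y x - B y z"
  using B_add2[of y x "-z"] B_minus2 by simp
lemma B_sum1: "B (sum f A) y = (\<Sum>a\<in>A. B (f a) y)"
  by (induct A rule: infinite_finite_induct) (auto simp: B_add1)
lemma B_sum2: "B y (sum f A) = (\<Sum>a\<in>A. B y (f a))"
  by (induct A rule: infinite_finite_induct) (auto simp: B_add2)

lemma eq_by_B: "(\<And>w. B w x = B w y) \<Longrightarrow> x = y"
proof -
  assume h: "\<And>w. B w x = B w y"
  have "x - y = 0"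
    by (rule B_nondeg) (simp add: B_sym[of "x - y"] B_diff2 h)
  thus ?thesis by simp
qed

lemma br_add2: "br z (x + y) = br z x + br z y"
  by (rule eq_by_B) (simp add: B_inv[symmetric] B_add2)
lemma br_sc2: "br y (sc c x) = sc c (br y x)"
  by (rule eq_by_B) (simp add: B_inv[symmetric] B_sc2)
lemma br_zero1[simp]: "br 0 y = 0"
  using br_add1[of 0 0 y] by simp
lemma br_zero2[simp]: "br y 0 = 0"
  using br_add2[of y 0 0] by simp
lemma br_anti: "br x y = - br y x"
proof -
  have "br (x + y) (x + y) = 0" by (rule br_self)
  also have "br (x + y) (x + y) = br x x + br y x + (br x y + br y y)" by (simp only: br_add1 br_add2)
  finally have "br x y + br y x = 0" by (simp add: br_self add.commute)
  thus ?thesis by (simp add: add_eq_0_iff add_eq_0_iff2)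
qed
lemma br_minus1: "br (- x) y = - br x y"
  using br_add1[of x "-x" y] by (simp add: add_eq_0_iff add_eq_0_iff2)
lemma br_minus2: "br y (- x) = - br y x"
  using br_add2[of y x "-x"] by (simp add: add_eq_0_iff add_eq_0_iff2)
lemma br_diff1: "br (x - z) y = br x y - br z y"
  using br_add1[of x "-z" y] br_minus1 by simp
lemma br_diff2: "br y (x - z) = br y x - br y z"
  using br_add2[of y x "-z"] br_minus2 by simp
lemma br_sum1: "br (sum f A) y = (\<Sum>a\<in>A. br (f a) y)"
  by (induct A rule: infinite_finite_induct) (auto simp: br_add1)
lemma br_sum2: "br y (sum f A) = (\<Sum>a\<in>A. br y (f a))"
  by (induct A rule: infinite_finite_induct) (auto simp: br_add2)

lemma br_der: "br h (br x y) = br (br h x) y + br x (br h y)"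
proof -
  have "br h (br x y) + br x (br y h) + br y (br h x) = 0" by (rule jacobi)
  hence "br h (br x y) = - br x (br y h) - br y (br h x)"
    by (simp add: eq_neg_iff_add_eq_0 algebra_simps)
  also have "\<dots> = br (br h x) y + br x (br h y)"
    using br_anti[of y h] br_anti[of y "br h x"] by (simp add: br_minus2)
  finally show ?thesis .
qed

lemma sub_H: "vs.subspace H"
  and H_fin: "fin_dim_subspace sc H"
  and span_roots: "vs.span (\<Union>\<alpha>\<in>hdual sc H. rootsp sc br H \<alpha>) = UNIV"
  and rootsp0: "rootsp sc br H (\<lambda>_. 0) = H"
  using eala unfolding eala_def subalgebra_def by auto

lemma H_abel: "x \<in> H \<Longrightarrow> h \<in> H \<Longrightarrow> br h x = 0"
  using rootsp0 unfolding rootsp_def by auto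

lemma zero_H[simp]: "0 \<in> H" using sub_H vs.subspace_0 by blast
lemma add_H: "x \<in> H \<Longrightarrow> y \<in> H \<Longrightarrow> x + y \<in> H" using sub_H vs.subspace_add by blast
lemma sc_H: "x \<in> H \<Longrightarrow> sc c x \<in> H" using sub_H vs.subspace_scale by blast
lemma sum_H: "(\<And>a. a \<in> A \<Longrightarrow> f a \<in> H) \<Longrightarrow> sum f A \<in> H" using sub_H vs.subspace_sum by blast
lemma diff_H: "x \<in> H \<Longrightarrow> y \<in> H \<Longrightarrow> x - y \<in> H" using sub_H vs.subspace_diff by blast

lemma s_bij: "bij \<sigma>"
  and s_add: "\<sigma> (x + y) = \<sigma> x + \<sigma> y"
  and s_sc: "\<sigma> (sc c x) = sc c (\<sigma> x)"
  and s_br: "\<sigma> (br x y) = br (\<sigma> x) (\<sigma> y)"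
  and s_m: "(\<sigma> ^^ m) = id"
  and s_H: "\<sigma> ` H = H"
  and s_B: "B (\<sigma> x) (\<sigma> y) = B x y"
  and s_cent: "{x \<in> fixed_pts \<sigma>. \<forall>h\<in>H \<inter> fixed_pts \<sigma>. br h x = 0} = H \<inter> fixed_pts \<sigma>"
  using adm unfolding admissible_aut_def by auto

lemma cent: "\<sigma> x = x \<Longrightarrow> (\<And>h. h \<in> H \<Longrightarrow> \<sigma> h = h \<Longrightarrow> br h x = 0) \<Longrightarrow> x \<in> H"
  using s_cent unfolding fixed_pts_def by blast

abbreviation sp :: "nat \<Rightarrow> 'a \<Rightarrow> 'a" where "sp n \<equiv> \<sigma> ^^ n"

lemma sp_add: "sp n (x + y) = sp n x + sp n y"
  by (induct n) (auto simp: s_add)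
lemma sp_zero[simp]: "sp n 0 = 0"
  using sp_add[of n 0 0] by simp
lemma sp_sc: "sp n (sc c x) = sc c (sp n x)"
  by (induct n) (auto simp: s_sc)
lemma sp_br: "sp n (br x y) = br (sp n x) (sp n y)"
  by (induct n) (auto simp: s_br)
lemma sp_B: "B (sp n x) (sp n y) = B x y"
  by (induct n) (auto simp: s_B)
lemma sp_H: "x \<in> H \<Longrightarrow> sp n x \<in> H"
  by (induct n) (use s_H in auto)
lemma sp_sum: "sp n (sum f A) = (\<Sum>a\<in>A. sp n (f a))"
  by (induct A rule: infinite_finite_induct) (auto simp: sp_add)
lemma sp_minus: "sp n (- x) = - sp n x"
  using sp_add[of n x "-x"] by (simp add: add_eq_0_iff add_eq_0_iff2)
lemma sp_diff: "sp n (x - y) = sp n x - sp n y"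
  using sp_add[of n x "-y"] sp_minus by simp
lemma sp_comp: "sp a (sp b x) = sp (a + b) x"
  by (simp add: funpow_add)
lemma sp_m: "sp m x = x"
  using s_m by simp
lemma sp_mult_m: "sp (m * q) x = x"
  by (induct q) (auto simp: sp_m funpow_add)
lemma sp_fixed: "\<sigma> h = h \<Longrightarrow> sp n h = h"
  by (induct n) auto
lemma s_zero[simp]: "\<sigma> 0 = 0" using sp_zero[of 1] by simp

lemma m_ge2: "m \<ge> 2" using pr prime_ge_2_nat by blast
lemma m_pos: "m > 0" using m_ge2 by simp
lemma om_m: "\<omega> ^ m = 1" and om_prim: "0 < j \<Longrightarrow> j < m \<Longrightarrow> \<omega> ^ j \<noteq> 1"
  using prim unfolding primitive_root_def by auto
lemma om_nz[simp]: "\<omega> \<noteq> 0" using om_m m_pos by (metis power_0_left zero_neq_one gr_implies_not0)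

end


lemma sum_shift_cyc:
  fixes f :: "nat \<Rightarrow> 'b::ab_group_add"
  assumes "f n = f 0"
  shows "(\<Sum>i<n. f (Suc i)) = (\<Sum>i<n. f i)"
proof -
  have "(\<Sum>i<Suc n. f i) = f 0 + (\<Sum>i<n. f (Suc i))" by (rule sum.lessThan_Suc_shift)
  moreover have "(\<Sum>i<Suc n. f i) = (\<Sum>i<n. f i) + f n" by simp
  ultimately show ?thesis using assms by (simp add: add.commute)
qed

context setting begin

lemma rootsp_sub: "vs.subspace (rootsp sc br S \<beta>)"
  unfolding vs.subspace_def rootsp_def
  by (auto simp: br_add2 br_sc2 vs.scale_right_distrib vs.scale_left_commute)

lemma rootsp_zero[simp]: "0 \<in> rootsp sc br S \<beta>"
  using rootsp_sub vs.subspace_0 by blast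
lemma rootsp_add: "x \<in> rootsp sc br S \<beta> \<Longrightarrow> y \<in> rootsp sc br S \<beta> \<Longrightarrow> x + y \<in> rootsp sc br S \<beta>"
  using rootsp_sub vs.subspace_add by blast
lemma rootsp_sc: "x \<in> rootsp sc br S \<beta> \<Longrightarrow> sc c x \<in> rootsp sc br S \<beta>"
  using rootsp_sub vs.subspace_scale by blast
lemma rootsp_minus: "x \<in> rootsp sc br S \<beta> \<Longrightarrow> - x \<in> rootsp sc br S \<beta>"
  using rootsp_sub vs.subspace_neg by blast
lemma rootsp_sum: "(\<And>a. a \<in> A \<Longrightarrow> f a \<in> rootsp sc br S \<beta>) \<Longrightarrow> sum f A \<in> rootsp sc br S \<beta>"
  using rootsp_sub vs.subspace_sum by blast
lemma rootsp_mono: "x \<in> rootsp sc br S \<beta> \<Longrightarrow> T \<subseteq> S \<Longrightarrow> x \<in> rootsp sc br T \<beta>"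
  unfolding rootsp_def by auto
lemma rootspD: "x \<in> rootsp sc br S \<beta> \<Longrightarrow> h \<in> S \<Longrightarrow> br h x = sc (\<beta> h) x"
  unfolding rootsp_def by auto
lemma rootspI: "(\<And>h. h \<in> S \<Longrightarrow> br h x = sc (\<beta> h) x) \<Longrightarrow> x \<in> rootsp sc br S \<beta>"
  unfolding rootsp_def by auto

lemma indep:
  assumes "finite I"
    and "\<forall>i\<in>I. \<forall>j\<in>I. i \<noteq> j \<longrightarrow> (\<exists>h\<in>S. f i h \<noteq> f j h)"
    and "\<forall>i\<in>I. w i \<in> rootsp sc br S (f i)"
    and "sum w I = 0"
  shows "\<forall>i\<in>I. w i = 0"
  using assms
proof (induction I arbitrary: w rule: finite_induct)
  case empty
  then show ?case by simp
next
  case (insert i0 I)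
  have dist: "\<forall>i\<in>I. \<forall>j\<in>I. i \<noteq> j \<longrightarrow> (\<exists>h\<in>S. f i h \<noteq> f j h)"
    using insert.prems(1) by blast
  have wI: "\<forall>i\<in>I. w i \<in> rootsp sc br S (f i)" using insert.prems(2) by blast
  have s0: "w i0 + sum w I = 0" using insert.prems(3) insert.hyps by simp
  have key: "\<forall>i\<in>I. sc (f i h - f i0 h) (w i) = 0" if hS: "h \<in> S" for h
  proof -
    have wi0: "w i0 = - sum w I" using s0 by (simp add: add_eq_0_iff2)
    have "br h (w i0) = sc (f i0 h) (w i0)" using insert.prems(2) hS rootspD by blast
    moreover have "br h (w i0) + (\<Sum>i\<in>I. br h (w i)) = 0"
      using s0 br_add2[of h "w i0" "sum w I"] br_sum2[of h w I] by simp
    ultimately have "(\<Sum>i\<in>I. br h (w i)) = sc (f i0 h) (sum w I)"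
      using wi0 by (simp add: add_eq_0_iff)
    hence "(\<Sum>i\<in>I. br h (w i) - sc (f i0 h) (w i)) = 0"
      by (simp add: sum_subtractf vs.scale_sum_right)
    hence "(\<Sum>i\<in>I. sc (f i h - f i0 h) (w i)) = 0"
    proof -
      assume a: "(\<Sum>i\<in>I. br h (w i) - sc (f i0 h) (w i)) = 0"
      have "(\<Sum>i\<in>I. br h (w i) - sc (f i0 h) (w i)) = (\<Sum>i\<in>I. sc (f i h - f i0 h) (w i))"
        by (rule sum.cong) (use wI hS in \<open>auto simp: rootspD vs.scale_left_diff_distrib\<close>)
      thus ?thesis using a by simp
    qed
    moreover have "\<forall>i\<in>I. sc (f i h - f i0 h) (w i) \<in> rootsp sc br S (f i)"
      using wI by (auto intro: rootsp_sc)
    ultimately show ?thesis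
      using insert.IH[of "\<lambda>i. sc (f i h - f i0 h) (w i)"] dist by blast
  qed
  have wI0: "\<forall>i\<in>I. w i = 0"
  proof
    fix i assume iI: "i \<in> I"
    with insert.hyps have "i \<noteq> i0" by auto
    with insert.prems(1) iI obtain h where hS: "h \<in> S" and ne: "f i h \<noteq> f i0 h" by blast
    from key[OF hS] iI have "sc (f i h - f i0 h) (w i) = 0" by blast
    with ne show "w i = 0" by simp
  qed
  hence "sum w I = 0" by simp
  with s0 have "w i0 = 0" by simp
  with wI0 show ?case by simp
qed

lemma decomp:
  "\<exists>F v. finite F \<and> F \<subseteq> hdual sc H \<and> (\<forall>\<alpha>\<in>F. v \<alpha> \<in> rootsp sc br H \<alpha>) \<and> x = sum v F"
proof -
  have "x \<in> vs.span (\<Union>\<alpha>\<in>hdual sc H. rootsp sc br H \<alpha>)" using span_roots by simp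
  thus ?thesis
  proof (induction rule: vs.span_induct_alt)
    case base
    show ?case by (rule exI[of _ "{}"]) simp
  next
    case (step c z y)
    from step.hyps(1) obtain \<alpha> where a: "\<alpha> \<in> hdual sc H" and z: "z \<in> rootsp sc br H \<alpha>" by blast
    from step.IH obtain F v where F: "finite F" "F \<subseteq> hdual sc H" "\<forall>\<alpha>\<in>F. v \<alpha> \<in> rootsp sc br H \<alpha>" "y = sum v F"
      by blast
    define v' where "v' = v(\<alpha> := sc c z + (if \<alpha> \<in> F then v \<alpha> else 0))"
    have "sc c z + y = sum v' (insert \<alpha> F)"
    proof (cases "\<alpha> \<in> F")
      case True
      have "sum v' F = v' \<alpha> + sum v' (F - {\<alpha>})" using F(1) True by (simp add: sum.remove)
      moreover have "sum v F = v \<alpha> + sum v (F - {\<alpha>})" using F(1) True by (simp add: sum.remove)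
      moreover have "sum v' (F - {\<alpha>}) = sum v (F - {\<alpha>})" unfolding v'_def by (rule sum.cong) auto
      ultimately show ?thesis using True F(4) unfolding v'_def by (simp add: insert_absorb add.assoc)
    next
      case False
      have "sum v' F = sum v F" unfolding v'_def by (rule sum.cong) (use False in auto)
      thus ?thesis using False F unfolding v'_def by simp
    qed
    moreover have "\<forall>\<beta>\<in>insert \<alpha> F. v' \<beta> \<in> rootsp sc br H \<beta>"
      using F(3) z unfolding v'_def by (auto intro!: rootsp_add rootsp_sc)
    ultimately show ?case using F a by (intro exI[of _ "insert \<alpha> F"] exI[of _ v']) auto
  qed
qed

lemma hdual_add: "\<alpha> \<in> hdual sc H \<Longrightarrow> x \<in> H \<Longrightarrow> y \<in> H \<Longrightarrow> \<alpha> (x + y) = \<alpha> x + \<alpha> y"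
  unfolding hdual_def by auto
lemma hdual_sc: "\<alpha> \<in> hdual sc H \<Longrightarrow> x \<in> H \<Longrightarrow> \<alpha> (sc c x) = c * \<alpha> x"
  unfolding hdual_def by auto
lemma hdual_out: "\<alpha> \<in> hdual sc H \<Longrightarrow> x \<notin> H \<Longrightarrow> \<alpha> x = 0"
  unfolding hdual_def by auto
lemma hdual_zero: "\<alpha> \<in> hdual sc H \<Longrightarrow> \<alpha> 0 = 0"
  using hdual_sc[of \<alpha> 0 0] by simp
lemma hdual_sum: "\<alpha> \<in> hdual sc H \<Longrightarrow> (\<And>a. a \<in> A \<Longrightarrow> f a \<in> H) \<Longrightarrow> \<alpha> (sum f A) = (\<Sum>a\<in>A. \<alpha> (f a))"
proof (induct A rule: infinite_finite_induct)
  case (infinite A) thus ?case by (simp add: hdual_zero)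
next
  case empty thus ?case by (simp add: hdual_zero)
next
  case (insert a A) thus ?case by (simp add: hdual_add sum_H)
qed

lemma sp_sum_fixed: "\<sigma> (\<Sum>j<m. sp j h) = (\<Sum>j<m. sp j h)"
proof -
  have "\<sigma> (\<Sum>j<m. sp j h) = (\<Sum>j<m. sp (Suc j) h)"
    using sp_sum[of 1 "\<lambda>j. sp j h" "{..<m}"] by (simp add: funpow_swap1)
  also have "\<dots> = (\<Sum>j<m. sp j h)"
    by (rule sum_shift_cyc[where f = "\<lambda>j. sp j h"]) (simp add: sp_m)
  finally show ?thesis .
qed

lemma orbit:
  assumes a: "\<alpha> \<in> hdual sc H" and fix0: "\<forall>h\<in>H. \<sigma> h = h \<longrightarrow> \<alpha> h = 0"
    and z: "z \<in> rootsp sc br H \<alpha>" and znz: "z \<noteq> 0"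
  shows "\<forall>h\<in>H. \<alpha> h = 0"
proof (rule ccontr)
  assume "\<not> (\<forall>h\<in>H. \<alpha> h = 0)"
  then obtain h0 where h0: "h0 \<in> H" "\<alpha> h0 \<noteq> 0" by blast
  define \<beta> where "\<beta> j = (\<lambda>h. \<alpha> (sp (m - j) h))" for j
  have spz: "sp j z \<in> rootsp sc br H (\<beta> j)" if "j < m" for j
  proof (rule rootspI)
    fix h assume hH: "h \<in> H"
    have e: "sp j (sp (m - j) h) = h" using that by (simp add: sp_comp sp_m)
    have "br h (sp j z) = br (sp j (sp (m - j) h)) (sp j z)" by (simp add: e)
    also have "\<dots> = sp j (br (sp (m - j) h) z)" by (simp add: sp_br)
    also have "\<dots> = sp j (sc (\<alpha> (sp (m - j) h)) z)" using z sp_H[OF hH] by (simp add: rootspD)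
    finally show "br h (sp j z) = sc (\<beta> j h) (sp j z)" by (simp add: sp_sc \<beta>_def)
  qed
  define y where "y = (\<Sum>j<m. sp j z)"
  have yH: "y \<in> H"
  proof (rule cent)
    show "\<sigma> y = y" unfolding y_def by (rule sp_sum_fixed)
    fix h assume hH: "h \<in> H" and hf: "\<sigma> h = h"
    have "br h y = (\<Sum>j<m. br h (sp j z))" unfolding y_def by (simp add: br_sum2)
    also have "\<dots> = (\<Sum>j<m. sc (\<beta> j h) (sp j z))"
      by (rule sum.cong) (simp_all add: rootspD[OF spz] hH)
    also have "\<dots> = 0"
      by (rule sum.neutral) (use fix0 hH hf in \<open>auto simp: \<beta>_def sp_fixed\<close>)
    finally show "br h y = 0" .
  qed
  define f where "f j = (if j < m then \<beta> j else (\<lambda>_. 0))" for j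
  define w where "w j = (if j < m then sp j z else - y)" for j
  have sumw: "sum w {..m} = 0"
  proof -
    have "sum w {..m} = sum w {..<m} + w m" by (simp add: lessThan_Suc_atMost[symmetric])
    also have "sum w {..<m} = y" unfolding y_def w_def by (rule sum.cong) auto
    finally show ?thesis by (simp add: w_def)
  qed
  have wroot: "\<forall>i\<in>{..m}. w i \<in> rootsp sc br H (f i)"
  proof
    fix i assume "i \<in> {..m}"
    show "w i \<in> rootsp sc br H (f i)"
    proof (cases "i < m")
      case True thus ?thesis using spz by (simp add: w_def f_def)
    next
      case False
      have "- y \<in> H" using yH sub_H vs.subspace_neg by blast
      thus ?thesis using False rootsp0 by (simp add: w_def f_def)
    qed
  qed
  have bnz: "\<exists>h\<in>H. \<beta> i h \<noteq> 0" if "i < m" for i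
  proof -
    have "\<beta> i (sp i h0) = \<alpha> h0" using that by (simp add: \<beta>_def sp_comp sp_m)
    thus ?thesis using h0 sp_H[OF h0(1), of i] by (intro bexI[of _ "sp i h0"]) auto
  qed
  have inv1: "\<forall>h\<in>H. \<alpha> (\<sigma> h) = \<alpha> h" if d: "0 < d" "d < m" and eq: "\<forall>h\<in>H. \<alpha> (sp d h) = \<alpha> h" for d
  proof -
    have mult: "\<forall>h\<in>H. \<alpha> (sp (d * n) h) = \<alpha> h" for n
    proof (induct n)
      case 0 thus ?case by simp
    next
      case (Suc n)
      show ?case
      proof
        fix h assume hH: "h \<in> H"
        have "sp (d * Suc n) h = sp d (sp (d * n) h)" by (simp add: sp_comp)
        hence "\<alpha> (sp (d * Suc n) h) = \<alpha> (sp (d * n) h)" using eq sp_H[OF hH] by simp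
        thus "\<alpha> (sp (d * Suc n) h) = \<alpha> h" using Suc hH by simp
      qed
    qed
    have "\<not> m dvd d" using d by (auto dest: dvd_imp_le)
    hence cop: "coprime m d" using pr prime_imp_coprime_nat by blast
    obtain x q where xq: "d * x = m * q + gcd d m" using bezout_nat[of d m] d by auto
    have g: "gcd d m = 1" using cop by (simp add: coprime_iff_gcd_eq_1 gcd.commute)
    show ?thesis
    proof
      fix h assume hH: "h \<in> H"
      have "sp (d * x) h = sp (m * q) (sp 1 h)" using xq g sp_comp[of "m * q" 1 h] by simp
      hence "sp (d * x) h = \<sigma> h" by (simp add: sp_mult_m)
      thus "\<alpha> (\<sigma> h) = \<alpha> h" using mult hH by metis
    qed
  qed
  have distinct: "\<exists>h\<in>H. \<beta> i h \<noteq> \<beta> j h" if ij: "i < j" "j < m" for i j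
  proof (rule ccontr)
    assume "\<not> (\<exists>h\<in>H. \<beta> i h \<noteq> \<beta> j h)"
    hence eqb: "\<forall>h\<in>H. \<beta> i h = \<beta> j h" by blast
    have e2: "\<forall>h\<in>H. \<alpha> (sp (j - i) h) = \<alpha> h"
    proof
      fix h assume hH: "h \<in> H"
      have "\<beta> i (sp j h) = \<beta> j (sp j h)" using eqb sp_H[OF hH] by blast
      moreover have "sp (m - i) (sp j h) = sp (j - i) (sp m h)"
      proof -
        have "m - i + j = j - i + m" using ij by simp
        thus ?thesis by (simp add: sp_comp)
      qed
      moreover have "sp (m - j) (sp j h) = sp m h" using ij by (simp add: sp_comp)
      ultimately show "\<alpha> (sp (j - i) h) = \<alpha> h" by (simp add: \<beta>_def sp_m)
    qed
    have inv: "\<forall>h\<in>H. \<alpha> (\<sigma> h) = \<alpha> h" by (rule inv1[of "j - i"]) (use ij e2 in auto)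
    have invn: "\<forall>h\<in>H. \<alpha> (sp n h) = \<alpha> h" for n
    proof (induct n)
      case 0 thus ?case by simp
    next
      case (Suc n)
      show ?case
      proof
        fix h assume hH: "h \<in> H"
        have "sp (Suc n) h = \<sigma> (sp n h)" by simp
        hence "\<alpha> (sp (Suc n) h) = \<alpha> (sp n h)" using inv sp_H[OF hH, of n] by simp
        thus "\<alpha> (sp (Suc n) h) = \<alpha> h" using Suc hH by simp
      qed
    qed
    have "\<alpha> h0 = 0"
    proof -
      have "\<alpha> (\<Sum>j<m. sp j h0) = 0"
        using fix0 sp_sum_fixed[of h0] sum_H[of "{..<m}" "\<lambda>j. sp j h0"] sp_H h0(1) by blast
      moreover have "\<alpha> (\<Sum>j<m. sp j h0) = (\<Sum>j<m. \<alpha> h0)"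
        using hdual_sum[OF a, of "{..<m}" "\<lambda>j. sp j h0"] sp_H h0(1) invn by simp
      ultimately show ?thesis using m_pos by simp
    qed
    thus False using h0 by simp
  qed
  have dist: "\<forall>i\<in>{..m}. \<forall>j\<in>{..m}. i \<noteq> j \<longrightarrow> (\<exists>h\<in>H. f i h \<noteq> f j h)"
  proof (intro ballI impI)
    fix i j assume i: "i \<in> {..m}" and j: "j \<in> {..m}" and ne: "i \<noteq> j"
    show "\<exists>h\<in>H. f i h \<noteq> f j h"
    proof (cases "i < m \<and> j < m")
      case True
      show ?thesis
      proof (cases "i < j")
        case True thus ?thesis using distinct \<open>i < m \<and> j < m\<close> by (simp add: f_def)
      next
        case False hence "j < i" using ne by simp
        then obtain h where "h \<in> H" "\<beta> j h \<noteq> \<beta> i h" using distinct[of j i] \<open>i < m \<and> j < m\<close> by blast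
        thus ?thesis using \<open>i < m \<and> j < m\<close> by (intro bexI[of _ h]) (auto simp: f_def)
      qed
    next
      case False
      hence "(i = m \<and> j < m) \<or> (j = m \<and> i < m)" using i j ne by auto
      thus ?thesis using bnz by (auto simp: f_def)
    qed
  qed
  have "\<forall>i\<in>{..m}. w i = 0" by (rule indep[OF _ dist wroot sumw]) simp
  hence "w 0 = 0" by simp
  thus False using znz m_pos by (simp add: w_def)
qed

end


context setting begin

abbreviation pk :: "int \<Rightarrow> 'a \<Rightarrow> 'a" where "pk \<equiv> pi_k sc \<sigma> m \<omega>"

lemma pk_def': "pk k x = sc (1 / of_nat m) (\<Sum>i<m. sc (\<omega> powi (- (int i * k))) (sp i x))"
  unfolding pi_k_def by simp

lemma eigspD: "x \<in> eigsp sc \<sigma> \<omega> k \<Longrightarrow> \<sigma> x = sc (\<omega> powi k) x"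
  unfolding eigsp_def by simp
lemma eigspI: "\<sigma> x = sc (\<omega> powi k) x \<Longrightarrow> x \<in> eigsp sc \<sigma> \<omega> k"
  unfolding eigsp_def by simp
lemma eigsp_zero[simp]: "0 \<in> eigsp sc \<sigma> \<omega> k"
  unfolding eigsp_def by simp

lemma om_powi_add: "\<omega> powi (a + b) = \<omega> powi a * \<omega> powi b"
  by (simp add: power_int_add)
lemma om_powi_m: "\<omega> powi (int m * a) = 1"
  by (simp add: power_int_mult om_m)

lemma sp_eig: "x \<in> eigsp sc \<sigma> \<omega> k \<Longrightarrow> sp i x = sc (\<omega> powi (int i * k)) x"
proof (induct i)
  case 0 thus ?case by simp
next
  case (Suc i)
  have "sp (Suc i) x = \<sigma> (sc (\<omega> powi (int i * k)) x)" using Suc by simp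
  also have "\<dots> = sc (\<omega> powi (int i * k) * \<omega> powi k) x" using Suc(2) by (simp add: s_sc eigspD)
  also have "\<omega> powi (int i * k) * \<omega> powi k = \<omega> powi (int (Suc i) * k)"
    by (simp add: om_powi_add[symmetric] algebra_simps)
  finally show ?case .
qed

lemma pk_eig: "x \<in> eigsp sc \<sigma> \<omega> k \<Longrightarrow> pk k x = x"
proof -
  assume x: "x \<in> eigsp sc \<sigma> \<omega> k"
  have "(\<Sum>i<m. sc (\<omega> powi (- (int i * k))) (sp i x)) = (\<Sum>i<m. x)"
  proof (rule sum.cong)
    fix i assume "i \<in> {..<m}"
    have "\<omega> powi (- (int i * k)) * \<omega> powi (int i * k) = 1"
      by (simp add: om_powi_add[symmetric])
    thus "sc (\<omega> powi (- (int i * k))) (sp i x) = x" using x by (simp add: sp_eig)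
  qed simp
  also have "\<dots> = sc (of_nat m) x" by (simp add: vs.sum_constant_scale)
  finally show ?thesis using m_pos by (simp add: pk_def')
qed

lemma pk_add: "pk k (x + y) = pk k x + pk k y"
  by (simp add: pk_def' sp_add vs.scale_right_distrib sum.distrib)
lemma pk_sc: "pk k (sc c x) = sc c (pk k x)"
  by (simp add: pk_def' sp_sc vs.scale_sum_right ac_simps)
lemma pk_zero[simp]: "pk k 0 = 0"
  using pk_sc[of k 0 0] by simp
lemma pk_sum: "pk k (sum f A) = (\<Sum>a\<in>A. pk k (f a))"
  by (induct A rule: infinite_finite_induct) (auto simp: pk_add)
lemma pk_H: "x \<in> H \<Longrightarrow> pk k x \<in> H"
  unfolding pk_def' by (intro sc_H sum_H sp_H)

lemma pk_in_eig: "pk k x \<in> eigsp sc \<sigma> \<omega> k"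
proof (rule eigspI)
  define g where "g i = sc (\<omega> powi (- (int i * k))) (sp i x)" for i
  have gS: "sc (\<omega> powi k) (g (Suc i)) = sc (\<omega> powi (- (int i * k))) (sp (Suc i) x)" for i
  proof -
    have "\<omega> powi k * \<omega> powi (- (int (Suc i) * k)) = \<omega> powi (- (int i * k))"
      by (simp add: om_powi_add[symmetric] algebra_simps)
    thus ?thesis by (simp add: g_def)
  qed
  have gm: "g m = g 0"
  proof -
    have "\<omega> powi (- (int m * k)) = 1" using om_powi_m[of "-k"] by simp
    thus ?thesis by (simp add: g_def sp_m)
  qed
  have "\<sigma> (pk k x) = sc (1 / of_nat m) (\<Sum>i<m. sc (\<omega> powi (- (int i * k))) (sp (Suc i) x))"
    by (simp add: pk_def' s_sc sp_sum[of 1, simplified] funpow_swap1)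
  also have "(\<Sum>i<m. sc (\<omega> powi (- (int i * k))) (sp (Suc i) x)) = sc (\<omega> powi k) (\<Sum>i<m. g (Suc i))"
    by (simp add: gS vs.scale_sum_right)
  also have "(\<Sum>i<m. g (Suc i)) = (\<Sum>i<m. g i)" by (rule sum_shift_cyc) (rule gm)
  finally show "\<sigma> (pk k x) = sc (\<omega> powi k) (pk k x)"
    by (simp add: pk_def' g_def vs.scale_left_commute)
qed

lemma om_ne1: "0 < \<bar>d\<bar> \<Longrightarrow> \<bar>d\<bar> < int m \<Longrightarrow> \<omega> powi d \<noteq> 1"
proof -
  assume d: "0 < \<bar>d\<bar>" "\<bar>d\<bar> < int m"
  show ?thesis
  proof (cases "d > 0")
    case True
    have "\<omega> powi d = \<omega> ^ nat d" using True by (simp add: power_int_def)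
    moreover have "\<omega> ^ nat d \<noteq> 1" using om_prim[of "nat d"] d True by simp
    ultimately show ?thesis by simp
  next
    case False
    hence "d < 0" using d by simp
    have "\<omega> powi d = inverse (\<omega> ^ nat (- d))" using \<open>d < 0\<close> by (simp add: power_int_def power_inverse)
    moreover have "\<omega> ^ nat (- d) \<noteq> 1" using om_prim[of "nat (-d)"] d \<open>d < 0\<close> by simp
    ultimately show ?thesis by (metis inverse_1 inverse_inverse_eq)
  qed
qed

lemma geom0: "0 < \<bar>d\<bar> \<Longrightarrow> \<bar>d\<bar> < int m \<Longrightarrow> (\<Sum>t<m. \<omega> powi (int t * d)) = 0"
proof -
  assume d: "0 < \<bar>d\<bar>" "\<bar>d\<bar> < int m"
  define z where "z = \<omega> powi d"
  have z1: "z \<noteq> 1" using om_ne1[OF d] by (simp add: z_def)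
  have zm: "z ^ m = 1" unfolding z_def
    by (metis om_powi_m power_int_mult mult.commute power_int_of_nat)
  have "(\<Sum>t<m. \<omega> powi (int t * d)) = (\<Sum>t<m. z ^ t)"
    by (rule sum.cong) (auto simp: z_def, metis power_int_mult power_int_of_nat mult.commute)
  also have "\<dots> = (z ^ m - 1) / (z - 1)" using z1 by (rule geometric_sum)
  finally show ?thesis using zm by simp
qed

lemma geom_shift: "(\<Sum>a\<in>{c..<c + int m}. g a) = (\<Sum>t<m. g (c + int t))"
  by (rule sum.reindex_bij_witness[of _ "\<lambda>t. c + int t" "\<lambda>a. nat (a - c)"]) auto

lemma geom_int: "0 < \<bar>d\<bar> \<Longrightarrow> \<bar>d\<bar> < int m \<Longrightarrow> (\<Sum>a\<in>{c..<c + int m}. \<omega> powi (a * d)) = 0"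
proof -
  assume d: "0 < \<bar>d\<bar>" "\<bar>d\<bar> < int m"
  have "(\<Sum>a\<in>{c..<c + int m}. \<omega> powi (a * d)) = (\<Sum>t<m. \<omega> powi (c * d) * \<omega> powi (int t * d))"
    by (simp add: geom_shift om_powi_add[symmetric] algebra_simps)
  also have "\<dots> = \<omega> powi (c * d) * (\<Sum>t<m. \<omega> powi (int t * d))" by (simp add: sum_distrib_left)
  finally show ?thesis using geom0[OF d] by simp
qed

lemma sum_pk: "(\<Sum>b<m. pk (int b) x) = x"
proof -
  have "(\<Sum>b<m. pk (int b) x) = sc (1 / of_nat m) (\<Sum>b<m. \<Sum>i<m. sc (\<omega> powi (- (int i * int b))) (sp i x))"
    by (simp add: pk_def' vs.scale_sum_right)
  also have "(\<Sum>b<m. \<Sum>i<m. sc (\<omega> powi (- (int i * int b))) (sp i x))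
      = (\<Sum>i<m. sc (\<Sum>b<m. \<omega> powi (- (int i * int b))) (sp i x))"
    by (subst sum.swap) (simp add: vs.scale_sum_left)
  also have "\<dots> = (\<Sum>i<m. if i = 0 then sc (of_nat m) x else 0)"
  proof (rule sum.cong)
    fix i assume i: "i \<in> {..<m}"
    show "sc (\<Sum>b<m. \<omega> powi (- (int i * int b))) (sp i x) = (if i = 0 then sc (of_nat m) x else 0)"
    proof (cases "i = 0")
      case True thus ?thesis by simp
    next
      case False
      have "(\<Sum>b<m. \<omega> powi (- (int i * int b))) = (\<Sum>b<m. \<omega> powi (int b * (- int i)))"
        by (simp add: algebra_simps)
      also have "\<dots> = 0" by (rule geom0) (use i False in auto)
      finally show ?thesis using False by simp
    qed
  qed simp
  also have "\<dots> = sc (of_nat m) x" using m_pos by (simp add: sum.delta')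
  finally show ?thesis using m_pos by simp
qed

end


context setting begin

lemma br_sc_sc: "br (sc a u) (sc b v) = sc (a * b) (br u v)"
  by (simp add: br_sc1 br_sc2)

lemma pk_br: "br (pk a x) (pk b y) = sc (1 / of_nat m * (1 / of_nat m))
   (\<Sum>i<m. \<Sum>j<m. sc (\<omega> powi (- (int i * a)) * \<omega> powi (- (int j * b))) (br (sp i x) (sp j y)))"
  by (simp add: pk_def' br_sc_sc br_sum1 br_sum2 vs.scale_sum_right) (rule sum.swap)

lemma coef_sum:
  assumes "i < m" "j < m"
  shows "(\<Sum>a\<in>{c..<c + int m}. \<omega> powi (- (int i * a)) * \<omega> powi (- (int j * (k - a))))
     = (if i = j then of_nat m * \<omega> powi (- (int i * k)) else 0)"
proof -
  have "(\<Sum>a\<in>{c..<c + int m}. \<omega> powi (- (int i * a)) * \<omega> powi (- (int j * (k - a))))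
      = (\<Sum>a\<in>{c..<c + int m}. \<omega> powi (- (int j * k)) * \<omega> powi (a * (int j - int i)))"
  proof (rule sum.cong)
    fix a :: int
    have "- (int i * a) + - (int j * (k - a)) = - (int j * k) + a * (int j - int i)"
      by (simp add: algebra_simps)
    thus "\<omega> powi (- (int i * a)) * \<omega> powi (- (int j * (k - a))) = \<omega> powi (- (int j * k)) * \<omega> powi (a * (int j - int i))"
      by (metis om_powi_add)
  qed simp
  also have "\<dots> = \<omega> powi (- (int j * k)) * (\<Sum>a\<in>{c..<c + int m}. \<omega> powi (a * (int j - int i)))"
    by (simp add: sum_distrib_left)
  also have "\<dots> = (if i = j then of_nat m * \<omega> powi (- (int i * k)) else 0)"
  proof (cases "i = j")
    case True thus ?thesis by simp
  next
    case False
    have "(\<Sum>a\<in>{c..<c + int m}. \<omega> powi (a * (int j - int i))) = 0"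
      by (rule geom_int) (use assms False in auto)
    thus ?thesis using False by simp
  qed
  finally show ?thesis .
qed

lemma pk_br_sum:
  "(\<Sum>a\<in>{c..<c + int m}. br (pk a x) (pk (k - a) y)) = pk k (br x y)"
proof -
  define Z where "Z i j = br (sp i x) (sp j y)" for i j
  define e where "e a i j = \<omega> powi (- (int i * a)) * \<omega> powi (- (int j * (k - a)))" for a i j
  have "(\<Sum>a\<in>{c..<c + int m}. br (pk a x) (pk (k - a) y))
     = (\<Sum>a\<in>{c..<c + int m}. sc (1 / of_nat m * (1 / of_nat m)) (\<Sum>i<m. \<Sum>j<m. sc (e a i j) (Z i j)))"
    by (simp add: pk_br e_def Z_def)
  also have "\<dots> = sc (1 / of_nat m * (1 / of_nat m)) (\<Sum>a\<in>{c..<c + int m}. \<Sum>i<m. \<Sum>j<m. sc (e a i j) (Z i j))"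
    by (simp add: vs.scale_sum_right)
  also have "(\<Sum>a\<in>{c..<c + int m}. \<Sum>i<m. \<Sum>j<m. sc (e a i j) (Z i j))
      = (\<Sum>i<m. \<Sum>j<m. sc (\<Sum>a\<in>{c..<c + int m}. e a i j) (Z i j))"
  proof -
    have "(\<Sum>a\<in>{c..<c + int m}. \<Sum>i<m. \<Sum>j<m. sc (e a i j) (Z i j))
        = (\<Sum>i<m. \<Sum>a\<in>{c..<c + int m}. \<Sum>j<m. sc (e a i j) (Z i j))"
      by (rule sum.swap)
    also have "\<dots> = (\<Sum>i<m. \<Sum>j<m. \<Sum>a\<in>{c..<c + int m}. sc (e a i j) (Z i j))"
      by (rule sum.cong[OF refl], rule sum.swap)
    also have "\<dots> = (\<Sum>i<m. \<Sum>j<m. sc (\<Sum>a\<in>{c..<c + int m}. e a i j) (Z i j))"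
      by (simp add: vs.scale_sum_left)
    finally show ?thesis .
  qed
  also have "\<dots> = (\<Sum>i<m. sc (of_nat m * \<omega> powi (- (int i * k))) (Z i i))"
  proof (rule sum.cong)
    fix i assume i: "i \<in> {..<m}"
    have "(\<Sum>j<m. sc (\<Sum>a\<in>{c..<c + int m}. e a i j) (Z i j))
        = (\<Sum>j<m. if i = j then sc (of_nat m * \<omega> powi (- (int i * k))) (Z i j) else 0)"
      by (rule sum.cong) (use i in \<open>auto simp: e_def coef_sum\<close>)
    also have "\<dots> = sc (of_nat m * \<omega> powi (- (int i * k))) (Z i i)" using i by (simp add: sum.delta)
    finally show "(\<Sum>j<m. sc (\<Sum>a\<in>{c..<c + int m}. e a i j) (Z i j)) = sc (of_nat m * \<omega> powi (- (int i * k))) (Z i i)" .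
  qed simp
  finally have "(\<Sum>a\<in>{c..<c + int m}. br (pk a x) (pk (k - a) y))
     = sc (1 / of_nat m * (1 / of_nat m)) (\<Sum>i<m. sc (of_nat m * \<omega> powi (- (int i * k))) (Z i i))" .
  also have "\<dots> = sc (1 / of_nat m) (\<Sum>i<m. sc (\<omega> powi (- (int i * k))) (sp i (br x y)))"
    using m_pos by (simp add: vs.scale_sum_right Z_def sp_br)
  finally show ?thesis by (simp add: pk_def')
qed

lemma rootsp_cong: "(\<And>h. h \<in> S \<Longrightarrow> \<alpha> h = \<beta> h) \<Longrightarrow> rootsp sc br S \<alpha> = rootsp sc br S \<beta>"
  unfolding rootsp_def by auto

lemma centralizer:
  assumes xc: "\<And>h. h \<in> H \<Longrightarrow> \<sigma> h = h \<Longrightarrow> br h x = 0"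
  shows "x \<in> H"
proof -
  define S where "S = {h \<in> H. \<sigma> h = h}"
  obtain F v where F: "finite F" "F \<subseteq> hdual sc H" "\<forall>\<alpha>\<in>F. v \<alpha> \<in> rootsp sc br H \<alpha>" "x = sum v F"
    using decomp[of x] by (elim exE conjE)
  define F0 where "F0 = {\<alpha> \<in> F. \<forall>h\<in>S. \<alpha> h = 0}"
  have vF0: "v \<alpha> \<in> H" if a: "\<alpha> \<in> F0" for \<alpha>
  proof (cases "v \<alpha> = 0")
    case True thus ?thesis by simp
  next
    case False
    have aF: "\<alpha> \<in> F" using a by (simp add: F0_def)
    have "\<forall>h\<in>H. \<alpha> h = 0"
    proof (rule orbit[of \<alpha> "v \<alpha>"])
      show "\<alpha> \<in> hdual sc H" using F(2) aF by blast
      show "\<forall>h\<in>H. \<sigma> h = h \<longrightarrow> \<alpha> h = 0" using a by (simp add: F0_def S_def)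
      show "v \<alpha> \<in> rootsp sc br H \<alpha>" using F(3) aF by blast
      show "v \<alpha> \<noteq> 0" by (rule False)
    qed
    hence "rootsp sc br H \<alpha> = rootsp sc br H (\<lambda>_. 0)" by (intro rootsp_cong) auto
    moreover have "v \<alpha> \<in> rootsp sc br H \<alpha>" using F(3) aF by blast
    ultimately show ?thesis using rootsp0 by simp
  qed
  define x' where "x' = sum v (F - F0)"
  have xx': "x = sum v F0 + x'"
  proof -
    have "F0 \<subseteq> F" by (auto simp: F0_def)
    from sum.subset_diff[OF this F(1), of v] show ?thesis unfolding x'_def F(4) by (simp add: add.commute)
  qed
  have x'c: "x' \<in> rootsp sc br S (\<lambda>_. 0)"
  proof (rule rootspI)
    fix h assume h: "h \<in> S"
    have "br h (sum v F0) = 0"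
      using h vF0 by (simp add: br_sum2 S_def H_abel)
    moreover have "br h x = 0" using h xc by (simp add: S_def)
    ultimately show "br h x' = sc 0 x'" using xx' by (simp add: br_add2)
  qed
  define r where "r \<alpha> = (\<lambda>h. if h \<in> S then \<alpha> h else 0)" for \<alpha> :: "'a \<Rightarrow> complex"
  define G where "G = r ` (F - F0)"
  have z0G: "(\<lambda>_. 0) \<notin> G"
  proof
    assume "(\<lambda>_. 0) \<in> G"
    then obtain \<alpha> where a: "\<alpha> \<in> F - F0" "(\<lambda>_. 0) = r \<alpha>" by (auto simp: G_def)
    have "\<forall>h\<in>S. \<alpha> h = 0"
    proof
      fix h assume "h \<in> S"
      moreover have "r \<alpha> h = 0" using fun_cong[OF a(2), of h] by simp
      ultimately show "\<alpha> h = 0" by (simp add: r_def)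
    qed
    thus False using a by (simp add: F0_def)
  qed
  define w where "w \<gamma> = (if \<gamma> = (\<lambda>_. 0) then - x' else sum v {\<alpha> \<in> F - F0. r \<alpha> = \<gamma>})" for \<gamma>
  have finG: "finite G" using F(1) by (simp add: G_def)
  have "sum w (insert (\<lambda>_. 0) G) = - x' + sum w G" using finG z0G by (simp add: w_def)
  also have "sum w G = (\<Sum>\<gamma>\<in>G. sum v {\<alpha> \<in> F - F0. r \<alpha> = \<gamma>})"
    by (rule sum.cong) (use z0G in \<open>auto simp: w_def\<close>)
  also have "\<dots> = x'" unfolding x'_def
    by (rule sum.group) (use F(1) in \<open>auto simp: G_def\<close>)
  finally have sw: "sum w (insert (\<lambda>_. 0) G) = 0" by simp
  have wr: "\<forall>\<gamma>\<in>insert (\<lambda>_. 0) G. w \<gamma> \<in> rootsp sc br S \<gamma>"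
  proof
    fix \<gamma> assume g: "\<gamma> \<in> insert (\<lambda>_. 0) G"
    show "w \<gamma> \<in> rootsp sc br S \<gamma>"
    proof (cases "\<gamma> = (\<lambda>_. 0)")
      case True thus ?thesis using x'c by (simp add: w_def rootsp_minus)
    next
      case False
      have "v \<alpha> \<in> rootsp sc br S \<gamma>" if "\<alpha> \<in> F - F0" "r \<alpha> = \<gamma>" for \<alpha>
      proof -
        have "v \<alpha> \<in> rootsp sc br S \<alpha>"
        proof -
          have "v \<alpha> \<in> rootsp sc br H \<alpha>" using F(3) that(1) by blast
          moreover have "S \<subseteq> H" by (auto simp: S_def)
          ultimately show ?thesis by (rule rootsp_mono)
        qed
        moreover have "rootsp sc br S \<alpha> = rootsp sc br S \<gamma>"
          using that(2) by (intro rootsp_cong) (auto simp: r_def)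
        ultimately show ?thesis by simp
      qed
      hence "sum v {\<alpha> \<in> F - F0. r \<alpha> = \<gamma>} \<in> rootsp sc br S \<gamma>" by (intro rootsp_sum) auto
      thus ?thesis using False by (simp add: w_def)
    qed
  qed
  have dist: "\<forall>i\<in>insert (\<lambda>_. 0) G. \<forall>j\<in>insert (\<lambda>_. 0) G. i \<noteq> j \<longrightarrow> (\<exists>h\<in>S. i h \<noteq> j h)"
  proof (intro ballI impI)
    fix i j assume i: "i \<in> insert (\<lambda>_. 0) G" and j: "j \<in> insert (\<lambda>_. 0) G" and ne: "i \<noteq> j"
    have zi: "\<forall>h. h \<notin> S \<longrightarrow> i h = 0" using i by (auto simp: G_def r_def)
    have zj: "\<forall>h. h \<notin> S \<longrightarrow> j h = 0" using j by (auto simp: G_def r_def)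
    from ne obtain h where "i h \<noteq> j h" by (auto simp: fun_eq_iff)
    moreover have "h \<in> S"
    proof (rule ccontr)
      assume "h \<notin> S" thus False using zi zj \<open>i h \<noteq> j h\<close> by simp
    qed
    ultimately show "\<exists>h\<in>S. i h \<noteq> j h" by blast
  qed
  have "\<forall>\<gamma>\<in>insert (\<lambda>_. 0) G. w \<gamma> = 0" by (rule indep[OF _ dist wr sw]) (use finG in simp)
  hence "x' = 0" by (simp add: w_def)
  thus ?thesis using xx' vF0 by (simp add: sum_H)
qed

lemma supp0_sum:
  assumes "\<forall>n. n \<noteq> 0 \<longrightarrow> f n = (0::'a)"
  shows "(\<Sum>a\<in>{a. f a \<noteq> 0}. g a) = (if f 0 = 0 then 0 else g 0)"
proof -
  have "{a. f a \<noteq> 0} = (if f 0 = 0 then {} else {0})"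
  proof (cases "f 0 = 0")
    case True
    have "f a = 0" for a using assms True by (cases "a = 0") auto
    thus ?thesis using True by auto
  next
    case False thus ?thesis using assms by auto
  qed
  thus ?thesis by simp
qed

lemma affH_iff: "Z \<in> aff_H H \<sigma> \<longleftrightarrow> (fst Z 0 \<in> H \<and> \<sigma> (fst Z 0) = fst Z 0 \<and> (\<forall>n. n \<noteq> 0 \<longrightarrow> fst Z n = 0))"
  by (cases Z) (auto simp: aff_H_def fixed_pts_def)

lemma aff_br_H:
  assumes "(f, r, s) \<in> aff_H H \<sigma>"
  shows "aff_br sc br B (f, r, s) (g, r', s') =
     (\<lambda>n. br (f 0) (g n) + sc (s * of_int n) (g n) - sc (s' * of_int n) (f n), 0, 0)"
proof -
  have z: "\<forall>n. n \<noteq> 0 \<longrightarrow> f n = 0" using assms by (simp add: aff_H_def)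
  have "(\<Sum>a\<in>{a. f a \<noteq> 0}. br (f a) (g (n - a))) = br (f 0) (g n)" for n
    using supp0_sum[OF z, of "\<lambda>a. br (f a) (g (n - a))"] by simp
  moreover have "(\<Sum>a\<in>{a. f a \<noteq> 0}. of_int a * B (f a) (g (- a))) = 0"
    using supp0_sum[OF z, of "\<lambda>a. of_int a * B (f a) (g (- a))"] by simp
  ultimately show ?thesis by (simp add: aff_br_def)
qed

lemma tens_def': "tens k x = ((\<lambda>n. if n = k then x else 0), 0, 0)"
  by (simp add: tens_def)

lemma part1:
  assumes k: "k \<noteq> 0"
  shows "aff_rootsp sc br B H \<sigma> \<omega> (kdelta H \<sigma> k) = tens k ` (pk k ` H)"
proof
  show "aff_rootsp sc br B H \<sigma> \<omega> (kdelta H \<sigma> k) \<subseteq> tens k ` (pk k ` H)"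
  proof
    fix X assume X: "X \<in> aff_rootsp sc br B H \<sigma> \<omega> (kdelta H \<sigma> k)"
    obtain f r s where Xe: "X = (f, r, s)" by (cases X) auto
    have car: "X \<in> aff_carrier sc \<sigma> \<omega>" and ev: "\<forall>Z\<in>aff_H H \<sigma>. aff_br sc br B Z X = aff_scale sc (kdelta H \<sigma> k Z) X"
      using X by (auto simp: aff_rootsp_def)
    have eig: "\<forall>n. f n \<in> eigsp sc \<sigma> \<omega> n" using car Xe by (simp add: aff_carrier_def)
    have dH: "((\<lambda>_. 0), 0, 1) \<in> aff_H H \<sigma>" by (simp add: aff_H_def fixed_pts_def)
    have "aff_br sc br B ((\<lambda>_. 0), 0, 1) X = aff_scale sc (kdelta H \<sigma> k ((\<lambda>_. 0), 0, 1)) X"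
      using ev dH by blast
    hence e1: "(\<lambda>n. sc (of_int n) (f n), 0, 0) = ((\<lambda>n. sc (of_int k) (f n)), of_int k * r, of_int k * s)"
      using dH by (simp add: Xe aff_br_H kdelta_def aff_scale_def)
    have rs: "r = 0" "s = 0" using e1 k by auto
    have fz: "f n = 0" if "n \<noteq> k" for n
    proof -
      have "sc (of_int n) (f n) = sc (of_int k) (f n)" using e1 by (simp add: fun_eq_iff)
      hence "sc (of_int n - of_int k) (f n) = 0" by (simp add: vs.scale_left_diff_distrib)
      thus ?thesis using that by simp
    qed
    have fk: "f k \<in> H"
    proof (rule centralizer)
      fix h assume h: "h \<in> H" "\<sigma> h = h"
      define Z where "Z = ((\<lambda>n::int. if n = 0 then h else 0), (0::complex), (0::complex))"
      have ZH: "Z \<in> aff_H H \<sigma>" using h by (simp add: Z_def aff_H_def fixed_pts_def)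
      have "aff_br sc br B Z X = aff_scale sc (kdelta H \<sigma> k Z) X" using ev ZH by blast
      hence "fst (aff_br sc br B Z X) k = fst (aff_scale sc (kdelta H \<sigma> k Z) X) k" by simp
      thus "br h (f k) = 0" using ZH unfolding Z_def
        by (simp add: Xe rs aff_br_H kdelta_def aff_scale_def)
    qed
    have "X = tens k (f k)" using Xe rs fz by (auto simp: tens_def' fun_eq_iff)
    moreover have "f k = pk k (f k)" using eig by (simp add: pk_eig)
    ultimately show "X \<in> tens k ` (pk k ` H)" using fk by auto
  qed
next
  show "tens k ` (pk k ` H) \<subseteq> aff_rootsp sc br B H \<sigma> \<omega> (kdelta H \<sigma> k)"
  proof
    fix X assume "X \<in> tens k ` (pk k ` H)"
    then obtain h where h: "h \<in> H" and Xe: "X = tens k (pk k h)" by auto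
    define x where "x = pk k h"
    have xH: "x \<in> H" using h by (simp add: x_def pk_H)
    have car: "X \<in> aff_carrier sc \<sigma> \<omega>"
    proof -
      have "{n. (if n = k then x else 0) \<noteq> 0} \<subseteq> {k}" by auto
      hence "finite {n. (if n = k then x else 0) \<noteq> 0}" by (rule finite_subset) simp
      moreover have "(if n = k then x else 0) \<in> eigsp sc \<sigma> \<omega> n" for n
        by (simp add: x_def pk_in_eig)
      ultimately show ?thesis by (simp add: Xe aff_carrier_def tens_def' x_def[symmetric])
    qed
    have "aff_br sc br B Z X = aff_scale sc (kdelta H \<sigma> k Z) X" if ZH: "Z \<in> aff_H H \<sigma>" for Z :: "'a aff"
    proof -
      obtain f r s where Ze: "Z = (f, r, s)" by (cases Z) auto
      have f0: "f 0 \<in> H" "\<forall>n. n \<noteq> 0 \<longrightarrow> f n = 0" using ZH Ze by (auto simp: aff_H_def)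
      have "br (f 0) x = 0" using xH f0 H_abel by blast
      thus ?thesis using ZH Ze
        by (auto simp: Xe aff_br_H tens_def' x_def[symmetric] kdelta_def aff_scale_def fun_eq_iff mult.commute)
    qed
    thus "X \<in> aff_rootsp sc br B H \<sigma> \<omega> (kdelta H \<sigma> k)" using car by (simp add: aff_rootsp_def)
  qed
qed

end


context setting begin

abbreviation core where "core \<equiv> aff_core sc br B H \<sigma> \<omega>"

lemma aff_add_plus: "aff_add X Y = X + Y"
  unfolding aff_add_def by (auto split: prod.splits simp: plus_fun_def)
lemma aff_zero_0: "aff_zero = 0"
  unfolding aff_zero_def by (simp add: zero_prod_def zero_fun_def)

lemma core_zero: "0 \<in> core"
  unfolding aff_core_def
proof (rule InterI)
  fix A assume "A \<in> {A. A \<subseteq> aff_carrier sc \<sigma> \<omega> \<and> aff_zero \<in> A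
      \<and> (\<forall>X\<in>A. \<forall>Y\<in>A. aff_add X Y \<in> A)
      \<and> (\<forall>c. \<forall>X\<in>A. aff_scale sc c X \<in> A)
      \<and> (\<forall>X\<in>A. \<forall>Y\<in>A. aff_br sc br B X Y \<in> A)
      \<and> (\<Union>\<phi>\<in>aff_nonisotropic_roots sc br B H \<sigma> \<omega>. aff_rootsp sc br B H \<sigma> \<omega> \<phi>) \<subseteq> A}"
  hence "aff_zero \<in> A" by (simp only: mem_Collect_eq)
  thus "0 \<in> A" by (simp only: aff_zero_0)
qed

lemma core_add: "X \<in> core \<Longrightarrow> Y \<in> core \<Longrightarrow> X + Y \<in> core"
  unfolding aff_core_def aff_add_plus[symmetric]
  by (rule InterI) (drule InterD, assumption, drule InterD, assumption, simp only: mem_Collect_eq)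

lemma core_scale: "X \<in> core \<Longrightarrow> aff_scale sc c X \<in> core"
  unfolding aff_core_def
  by (rule InterI) (drule InterD, assumption, simp only: mem_Collect_eq)

lemma core_br: "X \<in> core \<Longrightarrow> Y \<in> core \<Longrightarrow> aff_br sc br B X Y \<in> core"
  unfolding aff_core_def
  by (rule InterI) (drule InterD, assumption, drule InterD, assumption, simp only: mem_Collect_eq)

lemma core_gen: "\<phi> \<in> aff_nonisotropic_roots sc br B H \<sigma> \<omega> \<Longrightarrow> X \<in> aff_rootsp sc br B H \<sigma> \<omega> \<phi> \<Longrightarrow> X \<in> core"
  unfolding aff_core_def
  by (rule InterI) (simp only: mem_Collect_eq, blast)

lemma core_sum: "(\<And>a. a \<in> A \<Longrightarrow> f a \<in> core) \<Longrightarrow> sum f A \<in> core"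
proof (induct A rule: infinite_finite_induct)
  case (infinite A) thus ?case by (simp add: core_zero)
next
  case empty thus ?case by (simp add: core_zero)
next
  case (insert a A) thus ?case by (simp add: core_add)
qed

lemma tens_zero[simp]: "tens a 0 = 0"
  by (simp add: tens_def zero_prod_def zero_fun_def fun_eq_iff)
lemma tens_add: "tens a ((x::'a) + y) = tens a x + tens a y"
  by (simp add: tens_def prod_eq_iff fun_eq_iff)
lemma tens_scale: "tens a (sc c x) = aff_scale sc c (tens a x)"
  by (simp add: tens_def aff_scale_def fun_eq_iff)
lemma tens_sum: "tens a (sum (f::_ \<Rightarrow> 'a) A) = (\<Sum>i\<in>A. tens a (f i))"
  by (induct A rule: infinite_finite_induct) (auto simp: tens_add)

lemma aff_br_tens:
  assumes "a + b \<noteq> 0"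
  shows "aff_br sc br B (tens a u) (tens b v) = tens (a + b) (br u v)"
proof (cases "u = 0")
  case True thus ?thesis by (simp add: aff_br_def tens_def fun_eq_iff)
next
  case False
  have supp: "{c. (if c = a then u else 0) \<noteq> 0} = {a}" using False by auto
  show ?thesis using assms False
    by (auto simp: aff_br_def tens_def supp fun_eq_iff)
qed

definition NN :: "'a set" where "NN = {z. \<forall>a. a \<noteq> 0 \<longrightarrow> tens a (pk a z) \<in> core}"

lemma NN_sub: "vs.subspace NN"
  unfolding vs.subspace_def NN_def
  by (auto simp: pk_add pk_sc tens_add tens_scale core_zero core_add core_scale)

lemma NN_br:
  assumes x: "x \<in> NN" and y: "y \<in> NN"
  shows "br x y \<in> NN"
  unfolding NN_def
proof (intro CollectI allI impI)
  fix k :: int assume k: "k \<noteq> 0"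
  define c where "c = \<bar>k\<bar> + 1"
  have "tens k (pk k (br x y)) = tens k (\<Sum>a\<in>{c..<c + int m}. br (pk a x) (pk (k - a) y))"
    by (simp add: pk_br_sum)
  also have "\<dots> = (\<Sum>a\<in>{c..<c + int m}. aff_br sc br B (tens a (pk a x)) (tens (k - a) (pk (k - a) y)))"
    by (simp add: tens_sum aff_br_tens k)
  also have "\<dots> \<in> core"
  proof (rule core_sum)
    fix a assume a: "a \<in> {c..<c + int m}"
    have "a \<noteq> 0" "k - a \<noteq> 0" using a by (auto simp: c_def)
    thus "aff_br sc br B (tens a (pk a x)) (tens (k - a) (pk (k - a) y)) \<in> core"
      using x y by (intro core_br) (auto simp: NN_def)
  qed
  finally show "tens k (pk k (br x y)) \<in> core" .
qed

lemma B_sp_fixed: "\<sigma> t = t \<Longrightarrow> B (sp i u) t = B u t"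
  using sp_B[of i u t] sp_fixed[of t i] by simp

lemma nondeg_fixed:
  assumes tH: "t \<in> H" and tf: "\<sigma> t = t" and orth: "\<And>h. h \<in> H \<Longrightarrow> \<sigma> h = h \<Longrightarrow> B h t = 0"
  shows "t = 0"
proof -
  have rt: "B u t = 0" if "u \<in> rootsp sc br H \<alpha>" "\<alpha> \<in> hdual sc H" for u \<alpha>
  proof (cases "\<forall>h\<in>H. \<alpha> h = 0")
    case True
    hence "rootsp sc br H \<alpha> = rootsp sc br H (\<lambda>_. 0)" by (intro rootsp_cong) auto
    hence uH: "u \<in> H" using that rootsp0 by simp
    have "B (\<Sum>i<m. sp i u) t = (\<Sum>i<m. B u t)" by (simp add: B_sum1 B_sp_fixed tf)
    moreover have "B (\<Sum>i<m. sp i u) t = 0"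
    proof (rule orth)
      show "(\<Sum>i<m. sp i u) \<in> H" using uH by (intro sum_H sp_H)
      show "\<sigma> (\<Sum>i<m. sp i u) = (\<Sum>i<m. sp i u)" by (rule sp_sum_fixed)
    qed
    ultimately show ?thesis using m_pos by simp
  next
    case False
    then obtain h where h: "h \<in> H" "\<alpha> h \<noteq> 0" by blast
    have "\<alpha> h * B u t = B (br h u) t" using that(1) h by (simp add: rootspD B_sc1)
    also have "\<dots> = - B (br u h) t" by (simp add: br_anti[of h u] B_minus1)
    also have "\<dots> = - B u (br h t)" by (simp add: B_inv)
    also have "br h t = 0" using tH h H_abel by blast
    finally show ?thesis using h by simp
  qed
  have "B y t = 0" for y
  proof -
    obtain F v where F: "finite F" "F \<subseteq> hdual sc H" "\<forall>\<alpha>\<in>F. v \<alpha> \<in> rootsp sc br H \<alpha>" "y = sum v F"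
      using decomp[of y] by (elim exE conjE)
    have "B y t = (\<Sum>\<alpha>\<in>F. B (v \<alpha>) t)" using F(4) by (simp add: B_sum1)
    also have "\<dots> = 0" using F rt by (intro sum.neutral) blast
    finally show ?thesis .
  qed
  hence "\<And>y. B t y = 0" by (simp add: B_sym[of t])
  thus ?thesis by (rule B_nondeg)
qed

lemma sp_rootsp_fixed:
  assumes "u \<in> rootsp sc br S \<alpha>" "\<forall>h\<in>S. \<sigma> h = h"
  shows "sp i u \<in> rootsp sc br S \<alpha>"
proof (rule rootspI)
  fix h assume h: "h \<in> S"
  have "br h (sp i u) = br (sp i h) (sp i u)" using assms(2) h sp_fixed by simp
  also have "\<dots> = sp i (br h u)" by (simp add: sp_br)
  finally show "br h (sp i u) = sc (\<alpha> h) (sp i u)" using assms(1) h by (simp add: rootspD sp_sc)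
qed

lemma pk_rootsp_fixed:
  assumes "u \<in> rootsp sc br S \<alpha>" "\<forall>h\<in>S. \<sigma> h = h"
  shows "pk a u \<in> rootsp sc br S \<alpha>"
  unfolding pk_def'
proof (rule rootsp_sc, rule rootsp_sum, rule rootsp_sc)
  fix i show "sp i u \<in> rootsp sc br S \<alpha>" using assms by (rule sp_rootsp_fixed)
qed

lemma pairing:
  assumes X0: "X \<noteq> 0" and Xe: "X \<in> eigsp sc \<sigma> \<omega> a"
    and Xr: "X \<in> rootsp sc br {h \<in> H. \<sigma> h = h} \<beta>"
  shows "\<exists>Y b. Y \<in> eigsp sc \<sigma> \<omega> b \<and> \<omega> powi a * \<omega> powi b = 1
     \<and> Y \<in> rootsp sc br {h \<in> H. \<sigma> h = h} (\<lambda>h. - \<beta> h) \<and> B X Y \<noteq> 0"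
proof -
  define S where "S = {h \<in> H. \<sigma> h = h}"
  have "\<exists>Y0. B X Y0 \<noteq> 0"
  proof (rule ccontr)
    assume "\<not> (\<exists>Y0. B X Y0 \<noteq> 0)"
    hence "\<And>y. B X y = 0" by simp
    hence "X = 0" by (rule B_nondeg)
    with X0 show False ..
  qed
  then obtain Y0 where Y0: "B X Y0 \<noteq> 0" by (elim exE)
  obtain F v where F: "finite F" "F \<subseteq> hdual sc H" "\<forall>\<alpha>\<in>F. v \<alpha> \<in> rootsp sc br H \<alpha>" "Y0 = sum v F"
    using decomp[of Y0] by (elim exE conjE)
  have "Y0 = (\<Sum>\<alpha>\<in>F. \<Sum>b<m. pk (int b) (v \<alpha>))" using F(4) by (simp add: sum_pk)
  hence "B X Y0 = (\<Sum>\<alpha>\<in>F. \<Sum>b<m. B X (pk (int b) (v \<alpha>)))" by (simp add: B_sum2)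
  hence "\<exists>\<alpha>\<in>F. \<exists>b<m. B X (pk (int b) (v \<alpha>)) \<noteq> 0"
  proof -
    assume eq: "B X Y0 = (\<Sum>\<alpha>\<in>F. \<Sum>b<m. B X (pk (int b) (v \<alpha>)))"
    show ?thesis
    proof (rule ccontr)
      assume "\<not> ?thesis"
      hence "\<forall>\<alpha>\<in>F. \<forall>b\<in>{..<m}. B X (pk (int b) (v \<alpha>)) = 0" by simp
      hence "(\<Sum>\<alpha>\<in>F. \<Sum>b<m. B X (pk (int b) (v \<alpha>))) = 0" by simp
      with eq Y0 show False by simp
    qed
  qed
  then obtain \<alpha> b where ab: "\<alpha> \<in> F" "b < m" and ne: "B X (pk (int b) (v \<alpha>)) \<noteq> 0" by blast
  define Y where "Y = pk (int b) (v \<alpha>)"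
  have Ye: "Y \<in> eigsp sc \<sigma> \<omega> (int b)" by (simp add: Y_def pk_in_eig)
  have YrS: "Y \<in> rootsp sc br S \<alpha>"
    unfolding Y_def
  proof (rule pk_rootsp_fixed)
    have "v \<alpha> \<in> rootsp sc br H \<alpha>" using F(3) ab(1) by blast
    moreover have "S \<subseteq> H" by (auto simp: S_def)
    ultimately show "v \<alpha> \<in> rootsp sc br S \<alpha>" by (rule rootsp_mono)
  qed (simp add: S_def)
  have XY: "B X Y \<noteq> 0" using ne by (simp add: Y_def)
  have wt: "\<alpha> h = - \<beta> h" if h: "h \<in> S" for h
  proof -
    have "\<beta> h * B X Y = B (br h X) Y" using Xr h by (simp add: rootspD B_sc1 S_def)
    also have "\<dots> = - B (br X h) Y" by (simp add: br_anti[of h X] B_minus1)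
    also have "\<dots> = - B X (br h Y)" by (simp add: B_inv)
    also have "\<dots> = - (\<alpha> h * B X Y)" using YrS h by (simp add: rootspD B_sc2)
    finally have "(\<beta> h + \<alpha> h) * B X Y = 0" by (simp add: algebra_simps)
    thus ?thesis using XY by (simp add: add_eq_0_iff)
  qed
  have Yr: "Y \<in> rootsp sc br S (\<lambda>h. - \<beta> h)"
    using YrS rootsp_cong[of S \<alpha> "\<lambda>h. - \<beta> h"] wt by simp
  have "B X Y = B (\<sigma> X) (\<sigma> Y)" by (simp add: s_B)
  also have "\<dots> = \<omega> powi a * \<omega> powi (int b) * B X Y"
    using Xe Ye by (simp add: eigspD B_sc1 B_sc2)
  finally have "1 * B X Y = \<omega> powi a * \<omega> powi (int b) * B X Y" by simp
  hence "\<omega> powi a * \<omega> powi (int b) = 1" using XY by (simp only: mult_cancel_right) simp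
  thus ?thesis using Ye Yr XY unfolding S_def by (intro exI[of _ Y] exI[of _ "int b"]) simp
qed

end


context setting begin

lemma brY_weight:
  assumes "Y \<in> rootsp sc br S \<nu>" "v \<in> rootsp sc br S \<mu>"
  shows "br Y v \<in> rootsp sc br S (\<lambda>h. \<nu> h + \<mu> h)"
proof (rule rootspI)
  fix h assume h: "h \<in> S"
  have "br h (br Y v) = br (br h Y) v + br Y (br h v)" by (rule br_der)
  also have "\<dots> = sc (\<nu> h + \<mu> h) (br Y v)"
    using assms h by (simp add: rootspD br_sc1 br_sc2 vs.scale_left_distrib)
  finally show "br h (br Y v) = sc (\<nu> h + \<mu> h) (br Y v)" .
qed

lemma brY_pow_weight:
  assumes "Y \<in> rootsp sc br S (\<lambda>h. - \<beta> h)" "v \<in> rootsp sc br S \<mu>"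
  shows "(br Y ^^ n) v \<in> rootsp sc br S (\<lambda>h. \<mu> h - of_nat n * \<beta> h)"
proof (induct n)
  case 0 thus ?case using assms(2) by simp
next
  case (Suc n)
  have "br Y ((br Y ^^ n) v) \<in> rootsp sc br S (\<lambda>h. - \<beta> h + (\<mu> h - of_nat n * \<beta> h))"
    by (rule brY_weight[OF assms(1) Suc])
  moreover have "(\<lambda>h. - \<beta> h + (\<mu> h - of_nat n * \<beta> h)) = (\<lambda>h. \<mu> h - of_nat (Suc n) * \<beta> h)"
    by (simp add: fun_eq_iff algebra_simps)
  ultimately show ?case by simp
qed

lemma pow_br_zero: "(br Y ^^ n) 0 = 0"
  by (induct n) auto
lemma pow_br_add: "(br Y ^^ n) (x + y) = (br Y ^^ n) x + (br Y ^^ n) y"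
  by (induct n) (auto simp: br_add2)
lemma pow_br_sc: "(br Y ^^ n) (sc c x) = sc c ((br Y ^^ n) x)"
  by (induct n) (auto simp: br_sc2)
lemma pow_br_minus: "(br Y ^^ n) (- x) = - (br Y ^^ n) x"
  by (induct n) (auto simp: br_minus2)
lemma pow_br_diff: "(br Y ^^ n) (x - y) = (br Y ^^ n) x - (br Y ^^ n) y"
  by (induct n) (auto simp: br_diff2)
lemma pow_br_sum: "(br Y ^^ n) (sum f A) = (\<Sum>a\<in>A. (br Y ^^ n) (f a))"
  by (induct A rule: infinite_finite_induct) (auto simp: pow_br_add pow_br_zero)
lemma pow_br_later: "(br Y ^^ n) v = 0 \<Longrightarrow> n \<le> K \<Longrightarrow> (br Y ^^ K) v = 0"
proof -
  assume "(br Y ^^ n) v = 0" "n \<le> K"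
  moreover have "(br Y ^^ K) v = (br Y ^^ ((K - n) + n)) v" using \<open>n \<le> K\<close> by simp
  hence "(br Y ^^ K) v = (br Y ^^ (K - n)) ((br Y ^^ n) v)" by (simp only: funpow_add o_apply)
  ultimately show ?thesis by (simp add: pow_br_zero)
qed

lemma nilp_weight:
  assumes T: "finite T" "vs.span T = UNIV"
    and Y: "Y \<in> rootsp sc br S (\<lambda>h. - \<beta> h)" and h0: "h0 \<in> S" "\<beta> h0 \<noteq> 0"
    and v: "v \<in> rootsp sc br S \<mu>"
  shows "(br Y ^^ card T) v = 0"
proof (rule ccontr)
  assume nz: "(br Y ^^ card T) v \<noteq> 0"
  define K where "K = card T"
  define f where "f n = (br Y ^^ n) v" for n
  have fnz: "f n \<noteq> 0" if "n \<le> K" for n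
    using nz pow_br_later[where Y=Y and n=n and v=v and K=K] that by (auto simp: f_def K_def)
  have fw: "f n \<in> rootsp sc br S (\<lambda>h. \<mu> h - of_nat n * \<beta> h)" for n
    unfolding f_def by (rule brY_pow_weight[OF Y v])
  have inj: "inj_on f {..K}"
  proof (rule inj_onI)
    fix i j assume i: "i \<in> {..K}" and j: "j \<in> {..K}" and e: "f i = f j"
    show "i = j"
    proof (rule ccontr)
      assume ne: "i \<noteq> j"
      have "br h0 (f i) = sc (\<mu> h0 - of_nat i * \<beta> h0) (f i)" using rootspD[OF fw[of i] h0(1)] by simp
      moreover have "br h0 (f i) = sc (\<mu> h0 - of_nat j * \<beta> h0) (f i)" using rootspD[OF fw[of j] h0(1)] e by simp
      ultimately have "sc ((\<mu> h0 - of_nat i * \<beta> h0) - (\<mu> h0 - of_nat j * \<beta> h0)) (f i) = 0"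
        by (simp add: vs.scale_left_diff_distrib)
      moreover have "(\<mu> h0 - of_nat i * \<beta> h0) - (\<mu> h0 - of_nat j * \<beta> h0) = (of_nat j - of_nat i) * \<beta> h0"
        by (simp add: algebra_simps)
      moreover have "(of_nat j - of_nat i :: complex) \<noteq> 0" using ne by simp
      ultimately show False using fnz i h0(2) by simp
    qed
  qed
  define A where "A = f ` {..K}"
  have cardA: "card A = Suc K" using inj by (simp add: A_def card_image)
  have indA: "vs.independent A"
    unfolding vs.independent_explicit_module
  proof (intro allI impI)
    fix t u w assume t: "finite t" "t \<subseteq> A" "(\<Sum>v\<in>t. sc (u v) v) = 0" "w \<in> t"
    define idx where "idx x = inv_into {..K} f x" for x
    have idx: "x \<in> A \<Longrightarrow> f (idx x) = x \<and> idx x \<le> K" for x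
      by (auto simp: idx_def A_def inv_into_f_f[OF inj] intro: inv_into_into)
    define g where "g x = (\<lambda>h. \<mu> h - of_nat (idx x) * \<beta> h)" for x
    have "\<forall>i\<in>t. sc (u i) i = 0"
    proof (rule indep[OF t(1) _ _ t(3)])
      show "\<forall>i\<in>t. \<forall>j\<in>t. i \<noteq> j \<longrightarrow> (\<exists>h\<in>S. g i h \<noteq> g j h)"
      proof (intro ballI impI)
        fix i j assume ij: "i \<in> t" "j \<in> t" "i \<noteq> j"
        have ii: "f (idx i) = i" and jj: "f (idx j) = j" using idx ij t(2) by auto
        hence "idx i \<noteq> idx j" using ij by auto
        hence "(of_nat (idx i) :: complex) \<noteq> of_nat (idx j)" by simp
        hence "g i h0 \<noteq> g j h0" using h0(2) by (simp add: g_def)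
        thus "\<exists>h\<in>S. g i h \<noteq> g j h" using h0(1) by blast
      qed
      show "\<forall>i\<in>t. sc (u i) i \<in> rootsp sc br S (g i)"
      proof
        fix i assume i: "i \<in> t"
        have "f (idx i) = i" using idx i t(2) by auto
        hence "i \<in> rootsp sc br S (g i)" using fw[of "idx i"] by (simp add: g_def)
        thus "sc (u i) i \<in> rootsp sc br S (g i)" by (rule rootsp_sc)
      qed
    qed
    hence "sc (u w) w = 0" using t(4) by blast
    moreover have "w \<noteq> 0" using t(2,4) fnz by (auto simp: A_def)
    ultimately show "u w = 0" by simp
  qed
  have "finite A \<and> card A \<le> card T"
    by (rule vs.independent_span_bound[OF T(1) indA]) (simp add: T(2))
  thus False using cardA by (simp add: K_def)
qed

lemma nilp:
  assumes T: "finite T" "vs.span T = UNIV"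
    and Y: "Y \<in> rootsp sc br {h \<in> H. \<sigma> h = h} (\<lambda>h. - \<beta> h)" and h0: "h0 \<in> H" "\<sigma> h0 = h0" "\<beta> h0 \<noteq> 0"
  shows "(br Y ^^ card T) z = 0"
proof -
  obtain F v where F: "finite F" "F \<subseteq> hdual sc H" "\<forall>\<alpha>\<in>F. v \<alpha> \<in> rootsp sc br H \<alpha>" "z = sum v F"
    using decomp[of z] by (elim exE conjE)
  have "(br Y ^^ card T) (v \<alpha>) = 0" if "\<alpha> \<in> F" for \<alpha>
  proof (rule nilp_weight[OF T Y _ h0(3)])
    show "h0 \<in> {h \<in> H. \<sigma> h = h}" using h0 by simp
    have "v \<alpha> \<in> rootsp sc br H \<alpha>" using F(3) that by blast
    moreover have "{h \<in> H. \<sigma> h = h} \<subseteq> H" by auto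
    ultimately show "v \<alpha> \<in> rootsp sc br {h \<in> H. \<sigma> h = h} \<alpha>" by (rule rootsp_mono)
  qed
  thus ?thesis using F(4) by (simp add: pow_br_sum)
qed

lemma jac1:
  assumes WY: "br (br X Y) Y = 0"
  shows "br X ((br Y ^^ Suc n) z) = (br Y ^^ Suc n) (br X z) + sc (of_nat (Suc n)) (br (br X Y) ((br Y ^^ n) z))"
proof (induct n)
  case 0
  have "br X (br Y z) = br (br X Y) z + br Y (br X z)" by (rule br_der)
  thus ?case by (simp add: add.commute)
next
  case (Suc n)
  define W where "W = br X Y"
  have comm: "br Y (br W u) = br W (br Y u)" for u
  proof -
    have "br W (br Y u) = br (br W Y) u + br Y (br W u)" by (rule br_der)
    thus ?thesis using WY by (simp add: W_def)
  qed
  define w where "w = (br Y ^^ Suc n) z"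
  have "br X ((br Y ^^ Suc (Suc n)) z) = br X (br Y w)" by (simp add: w_def)
  also have "\<dots> = br W w + br Y (br X w)" unfolding W_def by (rule br_der)
  also have "br X w = (br Y ^^ Suc n) (br X z) + sc (of_nat (Suc n)) (br W ((br Y ^^ n) z))"
    using Suc by (simp add: w_def W_def)
  also have "br Y \<dots> = (br Y ^^ Suc (Suc n)) (br X z) + sc (of_nat (Suc n)) (br W w)"
    by (simp add: br_add2 br_sc2 comm w_def)
  finally have e: "br X ((br Y ^^ Suc (Suc n)) z) = br W w + ((br Y ^^ Suc (Suc n)) (br X z) + sc (of_nat (Suc n)) (br W w))" .
  have "sc (of_nat (Suc (Suc n))) (br W w) = br W w + sc (of_nat (Suc n)) (br W w)"
    by (simp only: of_nat_Suc[of "Suc n"] vs.scale_left_distrib vs.scale_one)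
  hence "br X ((br Y ^^ Suc (Suc n)) z) = (br Y ^^ Suc (Suc n)) (br X z) + sc (of_nat (Suc (Suc n))) (br W w)"
    using e by (simp add: algebra_simps)
  thus ?case by (simp add: W_def w_def)
qed

lemma jac:
  assumes WX: "br (br X Y) X = 0" and WY: "br (br X Y) Y = 0"
    and nil: "\<And>z. (br Y ^^ K) z = 0"
  shows "(br (br X Y) ^^ K) z = 0"
proof -
  define W where "W = br X Y"
  have commX: "(br W ^^ j) (br X u) = br X ((br W ^^ j) u)" for j u
  proof (induct j)
    case 0 thus ?case by simp
  next
    case (Suc j)
    have "br W (br X v) = br X (br W v)" for v
    proof -
      have "br W (br X v) = br (br W X) v + br X (br W v)" by (rule br_der)
      thus ?thesis using WX by (simp add: W_def)
    qed
    thus ?case using Suc by simp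
  qed
  have claim: "j \<le> K \<Longrightarrow> (br W ^^ j) ((br Y ^^ (K - j)) z) = 0" for j z
  proof (induct j arbitrary: z)
    case 0 thus ?case by (simp add: nil)
  next
    case (Suc j)
    define n where "n = K - Suc j"
    have Kj: "K - j = Suc n" using Suc.prems by (simp add: n_def)
    have j1: "br X ((br Y ^^ Suc n) z) = (br Y ^^ Suc n) (br X z) + sc (of_nat (Suc n)) (br W ((br Y ^^ n) z))"
      unfolding W_def by (rule jac1[OF WY])
    have "sc (of_nat (Suc n)) ((br W ^^ j) (br W ((br Y ^^ n) z)))
        = (br W ^^ j) (br X ((br Y ^^ Suc n) z)) - (br W ^^ j) ((br Y ^^ Suc n) (br X z))"
      using j1 by (simp add: pow_br_sc[symmetric] pow_br_diff[symmetric])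
    also have "(br W ^^ j) (br X ((br Y ^^ Suc n) z)) = br X ((br W ^^ j) ((br Y ^^ (K - j)) z))"
      by (simp add: commX Kj)
    also have "(br W ^^ j) ((br Y ^^ (K - j)) z) = 0" using Suc by simp
    also have "(br W ^^ j) ((br Y ^^ Suc n) (br X z)) = 0" using Suc Kj by (metis Suc_leD)
    finally have "sc (of_nat (Suc n)) ((br W ^^ j) (br W ((br Y ^^ n) z))) = 0" by simp
    hence "of_nat (Suc n) = (0::complex) \<or> (br W ^^ j) (br W ((br Y ^^ n) z)) = 0"
      by (simp only: vs.scale_eq_0_iff)
    hence "(br W ^^ j) (br W ((br Y ^^ n) z)) = 0" using of_nat_neq_0[of n] by blast
    moreover have "(br W ^^ Suc j) ((br Y ^^ n) z) = (br W ^^ j) (br W ((br Y ^^ n) z))"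
      by (simp add: funpow_swap1)
    ultimately show ?case by (simp add: n_def)
  qed
  show ?thesis using claim[of K z] by (simp add: W_def)
qed

lemma ad_nil_zero:
  assumes WH: "W \<in> H" and nil: "\<And>z. (br W ^^ K) z = 0"
  shows "br W z = 0"
proof -
  have rt: "br W u = 0" if u: "u \<in> rootsp sc br H \<alpha>" for u \<alpha>
  proof -
    have p: "(br W ^^ n) u = sc (\<alpha> W ^ n) u" for n
    proof (induct n)
      case 0 thus ?case by simp
    next
      case (Suc n)
      thus ?case using u WH by (simp add: br_sc2 rootspD mult.commute)
    qed
    have "sc (\<alpha> W ^ K) u = 0" using p[of K] nil by simp
    hence "\<alpha> W = 0 \<or> u = 0" by auto
    thus ?thesis using u WH by (auto simp: rootspD)
  qed
  obtain F v where F: "finite F" "F \<subseteq> hdual sc H" "\<forall>\<alpha>\<in>F. v \<alpha> \<in> rootsp sc br H \<alpha>" "z = sum v F"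
    using decomp[of z] by (elim exE conjE)
  have "br W z = (\<Sum>\<alpha>\<in>F. br W (v \<alpha>))" using F(4) by (simp add: br_sum2)
  also have "\<dots> = 0" using F(3) rt by (intro sum.neutral) blast
  finally show ?thesis .
qed

lemma center_zero:
  assumes fd: "fd_simple sc br" and c: "\<And>z. br W z = 0"
  shows "W = 0"
proof -
  define I where "I = {w. \<forall>z. br w z = 0}"
  have "lie_ideal sc br I"
    unfolding lie_ideal_def
  proof
    show "vs.subspace I" unfolding vs.subspace_def I_def by (simp add: br_add1 br_sc1)
    show "\<forall>x\<in>I. \<forall>y. br x y \<in> I" by (simp add: I_def)
  qed
  hence "I = {0} \<or> I = UNIV" using fd unfolding fd_simple_def by blast
  moreover have "I \<noteq> UNIV"
  proof
    assume "I = UNIV"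
    hence "\<forall>x y. br x y = 0" by (auto simp: I_def)
    thus False using fd unfolding fd_simple_def by blast
  qed
  ultimately have "I = {0}" by blast
  moreover have "W \<in> I" using c by (simp add: I_def)
  ultimately show ?thesis by simp
qed

end


context setting begin

lemma aff_form_H:
  assumes "\<forall>n. n \<noteq> 0 \<longrightarrow> f n = 0"
  shows "aff_form B (f, r, s) (g, r', s') = B (f 0) (g 0) + r * s' + r' * s"
  using supp0_sum[OF assms, of "\<lambda>a. B (f a) (g (- a))"] by (simp add: aff_form_def)

lemma affH_add: "Z1 \<in> aff_H H \<sigma> \<Longrightarrow> Z2 \<in> aff_H H \<sigma> \<Longrightarrow> Z1 + Z2 \<in> aff_H H \<sigma>"
  unfolding affH_iff by (simp add: add_H s_add)

lemma affH_scale: "Z \<in> aff_H H \<sigma> \<Longrightarrow> aff_scale sc c Z \<in> aff_H H \<sigma>"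
  by (cases Z) (simp add: aff_scale_def aff_H_def fixed_pts_def sc_H s_sc)

lemma good:
  assumes fd: "fd_simple sc br" and b: "\<beta> \<in> hdual sc H" "\<exists>h\<in>H. \<beta> h \<noteq> 0"
    and x: "x \<in> rootsp sc br H \<beta>" and a: "a \<noteq> 0"
  shows "tens a (pk a x) \<in> core"
proof (cases "pk a x = 0")
  case True thus ?thesis by (simp add: core_zero)
next
  case False
  define S where "S = {h \<in> H. \<sigma> h = h}"
  define X where "X = pk a x"
  have X0: "X \<noteq> 0" using False by (simp add: X_def)
  have x0: "x \<noteq> 0" using False by auto
  have Xe: "X \<in> eigsp sc \<sigma> \<omega> a" by (simp add: X_def pk_in_eig)
  have xS: "x \<in> rootsp sc br S \<beta>" using x by (rule rootsp_mono) (auto simp: S_def)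
  have Xr: "X \<in> rootsp sc br S \<beta>" unfolding X_def by (rule pk_rootsp_fixed[OF xS]) (simp add: S_def)
  have "\<exists>h0\<in>S. \<beta> h0 \<noteq> 0"
  proof (rule ccontr)
    assume "\<not> (\<exists>h0\<in>S. \<beta> h0 \<noteq> 0)"
    hence "\<forall>h\<in>H. \<sigma> h = h \<longrightarrow> \<beta> h = 0" by (auto simp: S_def)
    hence "\<forall>h\<in>H. \<beta> h = 0" using orbit[OF b(1) _ x x0] by blast
    thus False using b(2) by blast
  qed
  then obtain h0 where h0: "h0 \<in> H" "\<sigma> h0 = h0" "\<beta> h0 \<noteq> 0" by (auto simp: S_def)
  obtain Y b' where Y: "Y \<in> eigsp sc \<sigma> \<omega> b'" "\<omega> powi a * \<omega> powi b' = 1"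
     "Y \<in> rootsp sc br S (\<lambda>h. - \<beta> h)" "B X Y \<noteq> 0"
    using pairing[OF X0 Xe Xr[unfolded S_def]] unfolding S_def by (elim exE conjE)
  define W where "W = br X Y"
  define c where "c = B X Y"
  have c0: "c \<noteq> 0" using Y(4) by (simp add: c_def)
  have Wf: "\<sigma> W = W"
  proof -
    have "\<sigma> W = br (sc (\<omega> powi a) X) (sc (\<omega> powi b') Y)"
      using Xe Y(1) by (simp add: W_def s_br eigspD)
    also have "\<dots> = W" by (simp add: br_sc_sc Y(2) W_def)
    finally show ?thesis .
  qed
  have WH: "W \<in> H"
  proof (rule cent[OF Wf])
    fix h assume h: "h \<in> H" "\<sigma> h = h"
    hence hS: "h \<in> S" by (simp add: S_def)
    have "br h W = br (br h X) Y + br X (br h Y)" unfolding W_def by (rule br_der)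
    also have "\<dots> = 0"
      using Xr Y(3) hS by (simp add: rootspD br_sc1 br_sc2 br_minus2 W_def)
    finally show "br h W = 0" .
  qed
  have WS: "W \<in> S" using WH Wf by (simp add: S_def)
  have BW: "B h W = \<beta> h * c" if "h \<in> S" for h
  proof -
    have "B h W = B (br h X) Y" by (simp add: W_def B_inv)
    also have "\<dots> = \<beta> h * c" using Xr that by (simp add: rootspD B_sc1 c_def)
    finally show ?thesis .
  qed
  have BWW: "B W W \<noteq> 0"
  proof
    assume BWW0: "B W W = 0"
    have bW: "\<beta> W = 0" using BW[OF WS] BWW0 c0 by simp
    have WX: "br W X = 0" using Xr WS bW by (simp add: rootspD)
    have WY: "br W Y = 0" using Y(3) WS bW by (simp add: rootspD)
    obtain T where T: "finite T" "vs.span T = UNIV"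
      using fd unfolding fd_simple_def fin_dim_subspace_def by blast
    have nY: "\<And>z. (br Y ^^ card T) z = 0"
      by (rule nilp[OF T Y(3)[unfolded S_def] h0])
    have nW: "\<And>z. (br W ^^ card T) z = 0"
      unfolding W_def by (rule jac) (use WX WY nY in \<open>simp_all add: W_def\<close>)
    have "\<And>z. br W z = 0" by (rule ad_nil_zero[OF WH nW])
    hence "W = 0" by (rule center_zero[OF fd])
    hence "\<beta> h0 * c = 0" using BW[of h0] h0 by (simp add: S_def)
    thus False using h0(3) c0 by simp
  qed
  define t where "t = sc (1 / c) W"
  have tH: "t \<in> H" by (simp add: t_def sc_H WH)
  have tf: "\<sigma> t = t" by (simp add: t_def s_sc Wf)
  have Bt: "B h t = \<beta> h" if "h \<in> S" for h
    using BW[OF that] c0 by (simp add: t_def B_sc2)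
  have Btt: "B t t \<noteq> 0" using BWW c0 by (simp add: t_def B_sc1 B_sc2)
  define \<phi> where "\<phi> Z = (if Z \<in> aff_H H \<sigma> then B (fst Z 0) t + of_int a * snd (snd Z) else 0)" for Z :: "'a aff"
  have phi_dual: "\<phi> \<in> aff_hdual sc H \<sigma>"
    unfolding aff_hdual_def
  proof (intro CollectI conjI ballI allI impI)
    fix Z1 Z2 assume Z: "Z1 \<in> aff_H H \<sigma>" "Z2 \<in> aff_H H \<sigma>"
    show "\<phi> (aff_add Z1 Z2) = \<phi> Z1 + \<phi> Z2"
      using Z affH_add[OF Z] by (simp add: \<phi>_def aff_add_plus B_add1 algebra_simps)
  next
    fix c' Z assume Z: "Z \<in> aff_H H \<sigma>"
    obtain f r s where Ze: "Z = (f, r, s)" by (cases Z) auto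
    show "\<phi> (aff_scale sc c' Z) = c' * \<phi> Z"
      using Z affH_scale[OF Z, of c'] by (simp add: \<phi>_def Ze aff_scale_def B_sc1 algebra_simps)
  next
    fix Z assume "Z \<notin> aff_H H \<sigma>"
    thus "\<phi> Z = 0" by (simp add: \<phi>_def)
  qed
  have TX: "tens a X \<in> aff_rootsp sc br B H \<sigma> \<omega> \<phi>"
  proof -
    have car: "tens a X \<in> aff_carrier sc \<sigma> \<omega>"
    proof -
      have "{n. (if n = a then X else 0) \<noteq> 0} \<subseteq> {a}" by auto
      hence "finite {n. (if n = a then X else 0) \<noteq> 0}" by (rule finite_subset) simp
      moreover have "(if n = a then X else 0) \<in> eigsp sc \<sigma> \<omega> n" for n using Xe by simp
      ultimately show ?thesis by (simp add: aff_carrier_def tens_def')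
    qed
    have "aff_br sc br B Z (tens a X) = aff_scale sc (\<phi> Z) (tens a X)" if ZH: "Z \<in> aff_H H \<sigma>" for Z
    proof -
      obtain f r s where Ze: "Z = (f, r, s)" by (cases Z) auto
      have f0: "f 0 \<in> S" using ZH Ze by (simp add: aff_H_def fixed_pts_def S_def)
      have "br (f 0) X = sc (B (f 0) t) X" using Xr f0 Bt by (simp add: rootspD)
      thus ?thesis using ZH Ze
        by (auto simp: tens_def' aff_br_H \<phi>_def aff_scale_def fun_eq_iff vs.scale_left_distrib mult.commute)
    qed
    thus ?thesis using car by (simp add: aff_rootsp_def)
  qed
  have TXnz: "tens a X \<noteq> aff_zero"
  proof
    assume "tens a X = aff_zero"
    hence "fst (tens a X) a = fst aff_zero a" by simp
    thus False using X0 by (simp add: tens_def aff_zero_def)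
  qed
  have phi_root: "\<phi> \<in> aff_roots sc br B H \<sigma> \<omega>"
    unfolding aff_roots_def using phi_dual TX TXnz by blast
  define T0 where "T0 = ((\<lambda>n::int. if n = 0 then t else 0), (of_int a :: complex), (0::complex))"
  have T0H: "T0 \<in> aff_H H \<sigma>" using tH tf by (simp add: T0_def aff_H_def fixed_pts_def)
  have T0rep: "\<forall>Z\<in>aff_H H \<sigma>. \<phi> Z = aff_form B Z T0"
  proof
    fix Z assume ZH: "Z \<in> aff_H H \<sigma>"
    obtain f r s where Ze: "Z = (f, r, s)" by (cases Z) auto
    have z: "\<forall>n. n \<noteq> 0 \<longrightarrow> f n = 0" using ZH Ze by (simp add: aff_H_def)
    show "\<phi> Z = aff_form B Z T0"
      using ZH by (simp add: Ze T0_def aff_form_H[OF z] \<phi>_def mult.commute)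
  qed
  have tv: "aff_tvec B H \<sigma> \<phi> = T0"
    unfolding aff_tvec_def
  proof (rule the_equality)
    show "T0 \<in> aff_H H \<sigma> \<and> (\<forall>Z\<in>aff_H H \<sigma>. \<phi> Z = aff_form B Z T0)" using T0H T0rep by blast
  next
    fix T assume T: "T \<in> aff_H H \<sigma> \<and> (\<forall>Z\<in>aff_H H \<sigma>. \<phi> Z = aff_form B Z T)"
    obtain fT rT sT where Te: "T = (fT, rT, sT)" by (cases T) auto
    have fTz: "\<forall>n. n \<noteq> 0 \<longrightarrow> fT n = 0" and fT0: "fT 0 \<in> H" "\<sigma> (fT 0) = fT 0"
      using T Te by (auto simp: aff_H_def fixed_pts_def)
    have Zc: "((\<lambda>_::int. 0::'a), 1::complex, 0::complex) \<in> aff_H H \<sigma>" by (simp add: aff_H_def fixed_pts_def)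
    have Zd: "((\<lambda>_::int. 0::'a), 0::complex, 1::complex) \<in> aff_H H \<sigma>" by (simp add: aff_H_def fixed_pts_def)
    have "\<phi> ((\<lambda>_. 0), 1, 0) = aff_form B ((\<lambda>_. 0), 1, 0) T" using T Zc by blast
    hence sT: "sT = 0" using Zc by (simp add: \<phi>_def Te aff_form_H)
    have "\<phi> ((\<lambda>_. 0), 0, 1) = aff_form B ((\<lambda>_. 0), 0, 1) T" using T Zd by blast
    hence rT: "rT = of_int a" using Zd by (simp add: \<phi>_def Te aff_form_H)
    have "B h (t - fT 0) = 0" if h: "h \<in> H" "\<sigma> h = h" for h
    proof -
      define Zh where "Zh = ((\<lambda>n::int. if n = 0 then h else 0), (0::complex), (0::complex))"
      have ZhH: "Zh \<in> aff_H H \<sigma>" using h by (simp add: Zh_def aff_H_def fixed_pts_def)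
      have "\<phi> Zh = aff_form B Zh T" using T ZhH by blast
      hence "B h t = B h (fT 0)" using ZhH by (simp add: \<phi>_def Zh_def Te aff_form_H)
      thus ?thesis by (simp add: B_diff2)
    qed
    moreover have "\<sigma> (t - fT 0) = t - fT 0"
    proof -
      have "\<sigma> (- fT 0) = - \<sigma> (fT 0)" using s_add[of "fT 0" "- fT 0"] by (simp add: add_eq_0_iff)
      thus ?thesis using tf fT0 s_add[of t "- fT 0"] by simp
    qed
    moreover have "t - fT 0 \<in> H" using tH fT0 by (simp add: diff_H)
    ultimately have "t - fT 0 = 0" by (intro nondeg_fixed) auto
    hence "fT 0 = t" by simp
    hence "fT = (\<lambda>n. if n = 0 then t else 0)" using fTz by (auto simp: fun_eq_iff)
    thus "T = T0" using Te sT rT by (simp add: T0_def)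
  qed
  have "aff_form B T0 T0 \<noteq> 0" using Btt by (simp add: T0_def aff_form_H)
  hence "\<phi> \<in> aff_nonisotropic_roots sc br B H \<sigma> \<omega>"
    using phi_root tv by (simp add: aff_nonisotropic_roots_def)
  thus ?thesis using TX core_gen by (simp add: X_def)
qed

end


context setting begin

lemma NN_all:
  assumes fd: "fd_simple sc br"
  shows "NN = UNIV"
proof -
  define G where "G = (\<Union>\<beta>\<in>{\<beta> \<in> hdual sc H. \<exists>h\<in>H. \<beta> h \<noteq> 0}. rootsp sc br H \<beta>)"
  have GNN: "G \<subseteq> NN"
  proof
    fix x assume "x \<in> G"
    then obtain \<beta> where b: "\<beta> \<in> hdual sc H" "\<exists>h\<in>H. \<beta> h \<noteq> 0" and x: "x \<in> rootsp sc br H \<beta>"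
      by (auto simp: G_def)
    show "x \<in> NN" unfolding NN_def using good[OF fd b x] by blast
  qed
  have NNsa: "subalgebra sc br NN"
    unfolding subalgebra_def using NN_sub NN_br by blast
  define N' where "N' = \<Inter>{A. subalgebra sc br A \<and> G \<subseteq> A}"
  have N'NN: "N' \<subseteq> NN" unfolding N'_def using NNsa GNN by blast
  have N'sub: "vs.subspace N'"
    unfolding N'_def by (rule vs.subspace_Inter) (auto simp: subalgebra_def)
  have N'br: "br x y \<in> N'" if "x \<in> N'" "y \<in> N'" for x y
    using that unfolding N'_def subalgebra_def by blast
  have GN': "G \<subseteq> N'" unfolding N'_def by blast
  define T where "T = {x \<in> N'. \<forall>h\<in>H. br x h \<in> N'}"
  have Tsa: "subalgebra sc br T"
    unfolding subalgebra_def
  proof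
    show "vs.subspace T"
      unfolding vs.subspace_def T_def
      using N'sub by (auto simp: br_add1 br_sc1 vs.subspace_0 vs.subspace_add vs.subspace_scale)
    show "\<forall>x\<in>T. \<forall>y\<in>T. br x y \<in> T"
    proof (intro ballI)
      fix x y assume xy: "x \<in> T" "y \<in> T"
      have "br x y \<in> N'" using xy N'br by (simp add: T_def)
      moreover have "br (br x y) h \<in> N'" if h: "h \<in> H" for h
      proof -
        have "br x (br y h) = br (br x y) h + br y (br x h)" by (rule br_der)
        hence e: "br (br x y) h = br x (br y h) - br y (br x h)" by (simp add: algebra_simps)
        have "br x (br y h) \<in> N'" using xy h N'br by (simp add: T_def)
        moreover have "br y (br x h) \<in> N'" using xy h N'br by (simp add: T_def)
        ultimately show ?thesis using e N'sub by (simp add: vs.subspace_diff)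
      qed
      ultimately show "br x y \<in> T" by (simp add: T_def)
    qed
  qed
  have GT: "G \<subseteq> T"
  proof
    fix g assume g: "g \<in> G"
    then obtain \<beta> where "g \<in> rootsp sc br H \<beta>" by (auto simp: G_def)
    hence "br g h = - sc (\<beta> h) g" if "h \<in> H" for h using that by (simp add: br_anti[of g h] rootspD)
    moreover have "g \<in> N'" using g GN' by blast
    ultimately show "g \<in> T" using N'sub by (simp add: T_def vs.subspace_neg vs.subspace_scale)
  qed
  have N'T: "N' \<subseteq> T" unfolding N'_def using Tsa GT by (intro Inter_lower) simp
  have split: "v \<in> G \<or> v \<in> H" if "v \<in> rootsp sc br H \<alpha>" "\<alpha> \<in> hdual sc H" for v \<alpha>
  proof (cases "\<exists>h\<in>H. \<alpha> h \<noteq> 0")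
    case True thus ?thesis using that by (auto simp: G_def)
  next
    case False
    hence "rootsp sc br H \<alpha> = rootsp sc br H (\<lambda>_. 0)" by (intro rootsp_cong) auto
    thus ?thesis using that rootsp0 by simp
  qed
  have ideal: "lie_ideal sc br N'"
    unfolding lie_ideal_def
  proof (intro conjI N'sub ballI allI)
    fix x y assume x: "x \<in> N'"
    obtain F v where F: "finite F" "F \<subseteq> hdual sc H" "\<forall>\<alpha>\<in>F. v \<alpha> \<in> rootsp sc br H \<alpha>" "y = sum v F"
      using decomp[of y] by (elim exE conjE)
    have "br x (v \<alpha>) \<in> N'" if a: "\<alpha> \<in> F" for \<alpha>
    proof -
      have "v \<alpha> \<in> G \<or> v \<alpha> \<in> H" using split F a by blast
      thus ?thesis
      proof
        assume "v \<alpha> \<in> G" thus ?thesis using GN' x N'br by blast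
      next
        assume "v \<alpha> \<in> H" thus ?thesis using x N'T by (auto simp: T_def)
      qed
    qed
    hence "(\<Sum>\<alpha>\<in>F. br x (v \<alpha>)) \<in> N'" using N'sub by (simp add: vs.subspace_sum)
    thus "br x y \<in> N'" using F(4) by (simp add: br_sum2)
  qed
  hence "N' = {0} \<or> N' = UNIV" using fd unfolding fd_simple_def by blast
  moreover have "N' \<noteq> {0}"
  proof
    assume N0: "N' = {0}"
    have allH: "y \<in> H" for y
    proof -
      obtain F v where F: "finite F" "F \<subseteq> hdual sc H" "\<forall>\<alpha>\<in>F. v \<alpha> \<in> rootsp sc br H \<alpha>" "y = sum v F"
        using decomp[of y] by (elim exE conjE)
      have "v \<alpha> \<in> H" if a: "\<alpha> \<in> F" for \<alpha>
      proof -
        have "v \<alpha> \<in> G \<or> v \<alpha> \<in> H" using split F a by blast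
        thus ?thesis using GN' N0 by auto
      qed
      thus ?thesis using F(4) by (simp add: sum_H)
    qed
    hence "\<forall>x y. br x y = 0" using H_abel by blast
    thus False using fd unfolding fd_simple_def by blast
  qed
  ultimately have "N' = UNIV" by blast
  thus ?thesis using N'NN by blast
qed

lemma part2:
  assumes fd: "fd_simple sc br" and k: "k \<noteq> 0"
  shows "aff_rootsp sc br B H \<sigma> \<omega> (kdelta H \<sigma> k) \<subseteq> core"
proof
  fix X assume "X \<in> aff_rootsp sc br B H \<sigma> \<omega> (kdelta H \<sigma> k)"
  then obtain h where "X = tens k (pk k h)" using part1[OF k] by auto
  moreover have "h \<in> NN" using NN_all[OF fd] by simp
  ultimately show "X \<in> core" using k by (simp add: NN_def)
qed

end

theorem lemma5p2:
  fixes sc :: "complex \<Rightarrow> 'a::ab_group_add \<Rightarrow> 'a"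
    and br :: "'a \<Rightarrow> 'a \<Rightarrow> 'a"
    and B :: "'a \<Rightarrow> 'a \<Rightarrow> complex"
    and H :: "'a set"
    and \<sigma> :: "'a \<Rightarrow> 'a"
    and m :: nat
    and \<omega> :: complex
  assumes "eala sc br B H"
    and "admissible_aut sc br B H \<sigma> m"
    and "primitive_root \<omega> m"
    and "\<exists>\<alpha>\<in>nonisotropic_roots sc br B H.
           dform B H (pi_dual \<sigma> m \<alpha>) (pi_dual \<sigma> m \<alpha>) \<noteq> 0"
    and "prime m"
  shows "(\<forall>k::int. k \<noteq> 0 \<longrightarrow>
            aff_rootsp sc br B H \<sigma> \<omega> (kdelta H \<sigma> k) = tens k ` (pi_k sc \<sigma> m \<omega> k ` H))
       \<and> (fd_simple sc br \<longrightarrow>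
            (\<forall>k::int. k \<noteq> 0 \<longrightarrow>
               aff_rootsp sc br B H \<sigma> \<omega> (kdelta H \<sigma> k) \<subseteq> aff_core sc br B H \<sigma> \<omega>))"
proof -
  interpret setting sc br B H \<sigma> m \<omega>
    using assms by (simp add: setting_def)
  show ?thesis using part1 part2 by blast
qed


end
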